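(* Let $\mu$ be an isotropic log-concave probability measure on $\mathbb{R}^n$. Then for every convex body $A\subset\mathbb{R}^n$, $\mu(A)\leq w_A$.
   Context: A probability measure on $\mathbb{R}^n$ is log-concave (full-dimensional) if it has a density $f$ with $\ln f$ concave; it is isotropic if its barycenter is $0$ and its covariance matrix is the identity. A convex body is a compact convex set with nonempty interior. The support function is $h_A(\xi)=\max_{y\in A}\langle \xi,y\rangle$, the width in direction $\xi\in S^{n-1}$ is $w_A(\xi)=h_A(\xi)+h_A(-\xi)$, and the minimal width is $w_A=\min_{\xi\in S^{n-1}} w_A(\xi)$. *)

theory Defs
  imports "HOL-Analysis.Analysis"
begin

text \<open>A density f on a Euclidean space is log-concave if it is nonnegative, Borel measurable,
  and ln f is concave (with ln 0 = -infinity), i.e.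
  f((1-t)x + t y) >= f(x)^(1-t) f(y)^t for all x, y and 0 < t < 1.\<close>
definition log_concave_density :: "('a::euclidean_space \<Rightarrow> real) \<Rightarrow> bool" where
  "log_concave_density f \<longleftrightarrow>
     f \<in> borel_measurable lborel \<and> (\<forall>x. 0 \<le> f x) \<and>
     (\<forall>x y. \<forall>t\<in>{0<..<1}. f x powr (1 - t) * f y powr t \<le> f ((1 - t) *\<^sub>R x + t *\<^sub>R y))"

definition isotropic_density :: "('a::euclidean_space \<Rightarrow> real) \<Rightarrow> bool" where
  "isotropic_density f \<longleftrightarrow>
     integrable lborel f \<and> integral\<^sup>L lborel f = 1 \<and>
     (\<forall>i\<in>Basis. integrable lborel (\<lambda>x. (x \<bullet> i) * f x) \<and>
                 integral\<^sup>L lborel (\<lambda>x. (x \<bullet> i) * f x) = 0) \<and>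
     (\<forall>i\<in>Basis. \<forall>j\<in>Basis. integrable lborel (\<lambda>x. (x \<bullet> i) * (x \<bullet> j) * f x) \<and>
                 integral\<^sup>L lborel (\<lambda>x. (x \<bullet> i) * (x \<bullet> j) * f x) = (if i = j then 1 else 0))"

definition convex_body :: "'a::euclidean_space set \<Rightarrow> bool" where
  "convex_body A \<longleftrightarrow> compact A \<and> convex A \<and> interior A \<noteq> {}"

definition support_fun :: "'a::euclidean_space set \<Rightarrow> 'a \<Rightarrow> real" where
  "support_fun A \<xi> = (SUP y\<in>A. \<xi> \<bullet> y)"

definition width :: "'a::euclidean_space set \<Rightarrow> 'a \<Rightarrow> real" where
  "width A \<xi> = support_fun A \<xi> + support_fun A (- \<xi>)"

definition min_width :: "'a::euclidean_space set \<Rightarrow> real" where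
  "min_width A = (INF \<xi>\<in>sphere 0 1. width A \<xi>)"

end

theory Submission
  imports Defs
begin


definition epow :: "ennreal \<Rightarrow> real \<Rightarrow> ennreal" where
  "epow x s = (if x = top then top else ennreal (enn2real x powr s))"

lemma epow_ennreal: "0 \<le> a \<Longrightarrow> epow (ennreal a) s = ennreal (a powr s)"
  by (simp add: epow_def)

lemma epow_0[simp]: "epow 0 s = 0"
  by (simp add: epow_def)

lemma epow_top[simp]: "epow top s = top"
  by (simp add: epow_def)

lemma epow_pos: "x \<noteq> 0 \<Longrightarrow> epow x s > 0"
  by (cases x rule: ennreal_cases) (auto simp: epow_def)

lemma epow_mono: assumes "x \<le> y" "0 \<le> s" shows "epow x s \<le> epow y s"
proof (cases y rule: ennreal_cases)
  case (real r)
  then obtain q where "x = ennreal q" "0 \<le> q" "q \<le> r"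
    using assms by (metis ennreal_cases ennreal_le_iff ennreal_less_top top.extremum_uniqueI)
  then show ?thesis using real assms by (simp add: epow_def powr_mono2)
qed simp

lemma amgm_enn:
  assumes t: "0 < t" "t < 1"
  shows "epow x (1-t) * epow y t \<le> ennreal (1-t) * x + ennreal t * y"
proof (cases "x = top \<or> y = top")
  case True
  show ?thesis
  proof (cases "x = 0 \<or> y = 0")
    case True then show ?thesis by auto
  next
    case False
    then show ?thesis using \<open>x = top \<or> y = top\<close> t
      by (auto simp: ennreal_mult_top ennreal_top_mult)
  qed
next
  case False
  then obtain a b where ab: "x = ennreal a" "y = ennreal b" "0 \<le> a" "0 \<le> b"
    by (metis ennreal_cases top.not_eq_extremum)
  have "a powr (1-t) * b powr t \<le> (1-t) * a + t * b"
  proof (cases "a = 0 \<or> b = 0")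
    case True then show ?thesis using ab t by auto
  next
    case False then show ?thesis using Youngs_inequality_0[of "1-t" t a b] ab t by auto
  qed
  then show ?thesis using ab t
    by (simp add: epow_def ennreal_mult'[symmetric] ennreal_plus[symmetric] del: ennreal_plus)
qed

lemma lborel_transl:
  fixes S :: "real set"
  assumes "S \<in> sets borel"
  shows "emeasure lborel {x. x + c \<in> S} = emeasure lborel S"
proof -
  have "emeasure (distr lborel borel ((+) c)) S = emeasure lborel ((+) c -` S \<inter> space lborel)"
    using assms by (intro emeasure_distr) auto
  then show ?thesis by (simp add: lborel_distr_plus vimage_def add.commute)
qed

lemma half_BM:
  fixes A B C :: "real set"
  assumes sets: "A \<in> sets borel" "B \<in> sets borel" "C \<in> sets borel"
    and sub: "\<And>a b. a \<in> A \<Longrightarrow> b \<in> B \<Longrightarrow> a + b \<in> C"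
    and ab: "a \<in> A" "b \<in> B"
  shows "emeasure lborel (A \<inter> {..<a}) + emeasure lborel (B \<inter> {b..}) \<le> emeasure lborel C"
proof -
  have 1: "emeasure lborel (A \<inter> {..<a}) = emeasure lborel {x. x + (-b) \<in> A \<inter> {..<a}}"
    using sets by (intro lborel_transl[symmetric]) auto
  have 2: "emeasure lborel (B \<inter> {b..}) = emeasure lborel {x. x + (-a) \<in> B \<inter> {b..}}"
    using sets by (intro lborel_transl[symmetric]) auto
  have "emeasure lborel {x. x + (-b) \<in> A \<inter> {..<a}} \<le> emeasure lborel (C \<inter> {..<a+b})"
    using sets sub[of _ b] ab by (intro emeasure_mono) (auto, metis add_diff_cancel diff_add_cancel)
  moreover have "emeasure lborel {x. x + (-a) \<in> B \<inter> {b..}} \<le> emeasure lborel (C \<inter> {a+b..})"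
    using sets sub[of a] ab by (intro emeasure_mono) (auto, metis add.commute diff_add_cancel)
  moreover have "emeasure lborel (C \<inter> {..<a+b}) + emeasure lborel (C \<inter> {a+b..}) = emeasure lborel C"
  proof -
    have "emeasure lborel (C \<inter> {..<a+b}) + emeasure lborel (C \<inter> {a+b..}) =
          emeasure lborel ((C \<inter> {..<a+b}) \<union> (C \<inter> {a+b..}))"
      using sets by (intro plus_emeasure) auto
    also have "(C \<inter> {..<a+b}) \<union> (C \<inter> {a+b..}) = C" by auto
    finally show ?thesis .
  qed
  ultimately show ?thesis using 1 2 by (metis add_mono)
qed

lemma sup_left:
  fixes A :: "real set"
  assumes A: "A \<in> sets borel" "A \<noteq> {}"
  shows "(SUP a\<in>A. emeasure lborel (A \<inter> {..<a})) = emeasure lborel A"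
proof (rule antisym)
  show "(SUP a\<in>A. emeasure lborel (A \<inter> {..<a})) \<le> emeasure lborel A"
    using A by (intro SUP_least emeasure_mono) auto
next
  let ?S = "(SUP a\<in>A. emeasure lborel (A \<inter> {..<a}))"
  show "emeasure lborel A \<le> ?S"
  proof (cases "bdd_above A")
    case False
    have "emeasure lborel A = emeasure lborel (\<Union>n. A \<inter> {..<real n})"
      by (rule arg_cong[where f="emeasure lborel"]) (auto, meson reals_Archimedean2)
    also have "\<dots> = (SUP n. emeasure lborel (A \<inter> {..<real n}))"
      using A by (intro SUP_emeasure_incseq[symmetric]) (auto simp: incseq_def)
    also have "\<dots> \<le> ?S"
    proof (rule SUP_least)
      fix n :: nat
      from False obtain a where a: "a \<in> A" "a > real n"
        by (meson bdd_above.unfold linorder_not_le)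
      then have "emeasure lborel (A \<inter> {..<real n}) \<le> emeasure lborel (A \<inter> {..<a})"
        using A by (intro emeasure_mono) auto
      also have "\<dots> \<le> ?S" using a by (intro SUP_upper) auto
      finally show "emeasure lborel (A \<inter> {..<real n}) \<le> ?S" .
    qed
    finally show ?thesis .
  next
    case True
    let ?s = "Sup A"
    show ?thesis
    proof (rule ennreal_le_epsilon)
      fix e :: real assume e: "0 < e"
      obtain a where a: "a \<in> A" "?s - e < a"
        using less_cSupE[of "?s - e" A] A e by auto
      have as: "a \<le> ?s" using True a by (intro cSup_upper) auto
      have "A \<subseteq> (A \<inter> {..<a}) \<union> {a..?s}"
        using True cSup_upper by fastforce
      then have "emeasure lborel A \<le> emeasure lborel ((A \<inter> {..<a}) \<union> {a..?s})"
        using A by (intro emeasure_mono) auto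
      also have "\<dots> \<le> emeasure lborel (A \<inter> {..<a}) + emeasure lborel {a..?s}"
        using A by (intro emeasure_subadditive) auto
      also have "emeasure lborel {a..?s} = ennreal (?s - a)"
        using as by simp
      also have "\<dots> \<le> ennreal e" using a by (intro ennreal_leI) auto
      also have "emeasure lborel (A \<inter> {..<a}) \<le> ?S" using a by (intro SUP_upper) auto
      finally show "emeasure lborel A \<le> ?S + ennreal e" by (simp add: add_mono)
    qed
  qed
qed

lemma lborel_refl:
  fixes S :: "real set"
  assumes "S \<in> sets borel"
  shows "emeasure lborel (uminus -` S) = emeasure lborel S"
proof -
  have "emeasure (distr lborel borel uminus) S = emeasure lborel (uminus -` S \<inter> space lborel)"
    using assms by (intro emeasure_distr) auto
  then show ?thesis by (simp add: lborel_distr_uminus)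
qed

lemma sup_right:
  fixes B :: "real set"
  assumes B: "B \<in> sets borel" "B \<noteq> {}"
  shows "(SUP b\<in>B. emeasure lborel (B \<inter> {b..})) = emeasure lborel B"
proof (rule antisym)
  show "(SUP b\<in>B. emeasure lborel (B \<inter> {b..})) \<le> emeasure lborel B"
    using B by (intro SUP_least emeasure_mono) auto
next
  let ?B = "uminus -` B"
  have B'1: "?B \<in> sets borel" using B
    by (auto simp: measurable_sets_borel[OF borel_measurable_uminus[OF measurable_ident_sets[OF refl]]])
  obtain b0 where "b0 \<in> B" using B by auto
  then have "- b0 \<in> ?B" by simp
  then have B': "?B \<in> sets borel" "?B \<noteq> {}" using B'1 by blast+
  have "emeasure lborel B = emeasure lborel ?B" using lborel_refl[OF B(1)] by simp
  also have "\<dots> = (SUP c\<in>?B. emeasure lborel (?B \<inter> {..<c}))" using sup_left[OF B'] by simp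
  also have "\<dots> \<le> (SUP b\<in>B. emeasure lborel (B \<inter> {b..}))"
  proof (rule SUP_least)
    fix c assume c: "c \<in> ?B"
    have "emeasure lborel (?B \<inter> {..<c}) = emeasure lborel (uminus -` (B \<inter> {-c<..}))"
      by (rule arg_cong[where f="emeasure lborel"]) auto
    also have "\<dots> = emeasure lborel (B \<inter> {-c<..})"
      using B by (intro lborel_refl) auto
    also have "\<dots> \<le> emeasure lborel (B \<inter> {-c..})"
      using B by (intro emeasure_mono) auto
    also have "\<dots> \<le> (SUP b\<in>B. emeasure lborel (B \<inter> {b..}))"
      using c by (intro SUP_upper) auto
    finally show "emeasure lborel (?B \<inter> {..<c}) \<le> (SUP b\<in>B. emeasure lborel (B \<inter> {b..}))" .
  qed
  finally show "emeasure lborel B \<le> (SUP b\<in>B. emeasure lborel (B \<inter> {b..}))" .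
qed

lemma BM1:
  fixes A B C :: "real set"
  assumes sets: "A \<in> sets borel" "B \<in> sets borel" "C \<in> sets borel" and ne: "A \<noteq> {}" "B \<noteq> {}"
    and sub: "\<And>a b. a \<in> A \<Longrightarrow> b \<in> B \<Longrightarrow> a + b \<in> C"
  shows "emeasure lborel A + emeasure lborel B \<le> emeasure lborel C"
proof -
  have "emeasure lborel A + emeasure lborel B =
     (SUP a\<in>A. emeasure lborel (A \<inter> {..<a})) + (SUP b\<in>B. emeasure lborel (B \<inter> {b..}))"
    using sup_left[OF sets(1) ne(1)] sup_right[OF sets(2) ne(2)] by simp
  also have "\<dots> = (SUP a\<in>A. SUP b\<in>B. emeasure lborel (A \<inter> {..<a}) + emeasure lborel (B \<inter> {b..}))"
    using ne by (subst ennreal_SUP_add_left[symmetric], simp, subst ennreal_SUP_add_right, simp_all)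
  also have "\<dots> \<le> emeasure lborel C"
    using half_BM[OF sets sub] by (intro SUP_least) auto
  finally show ?thesis .
qed


lemma epow_strict:
  assumes "x < y" "0 < s" shows "epow x s < epow y s"
proof (cases y rule: ennreal_cases)
  case top
  then have "x \<noteq> top" using assms by auto
  then show ?thesis using top by (auto simp: epow_def)
next
  case (real q)
  then obtain p where "x = ennreal p" "0 \<le> p" "p < q"
    using assms by (metis ennreal_cases ennreal_less_iff ennreal_less_top less_trans top.not_eq_extremum)
  moreover have "p powr s < q powr s" using \<open>0 \<le> p\<close> \<open>p < q\<close> assms by (intro powr_less_mono2) auto
  ultimately show ?thesis using real assms by (auto simp: epow_def intro!: ennreal_lessI)
qed

lemma epow_mult:
  assumes "0 < a" shows "epow (ennreal a * X) s = ennreal (a powr s) * epow X s"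
proof (cases X rule: ennreal_cases)
  case top
  then show ?thesis using assms by (simp add: ennreal_mult_top)
next
  case (real x)
  then show ?thesis using assms
    by (simp add: epow_def ennreal_mult'[symmetric] powr_mult del: ennreal_mult' ennreal_mult)
qed

lemma lborel_scale:
  fixes S :: "real set"
  assumes c: "0 < c" and S: "S \<in> sets borel"
  shows "emeasure lborel {u. u / c \<in> S} = ennreal c * emeasure lborel S"
proof -
  have "emeasure (distr lborel borel ((*) (1/c))) S = emeasure lborel ((*) (1/c) -` S \<inter> space lborel)"
    using S by (intro emeasure_distr) auto
  also have "distr lborel borel ((*) (1/c)) = density lborel (\<lambda>_. ennreal c)"
    using c by (subst lborel_distr_mult) auto
  finally show ?thesis using S by (simp add: emeasure_density_const vimage_def)
qed

lemma PBM:
  fixes f g h :: "real \<Rightarrow> ennreal"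
  assumes [measurable]: "f \<in> borel_measurable borel" "g \<in> borel_measurable borel" "h \<in> borel_measurable borel"
    and t: "0 < t" "t < 1"
    and H: "\<And>x y. epow (f x) (1-t) * epow (g y) t \<le> h ((1-t)*x + t*y)"
    and ab: "0 < a" "0 < b" and exf: "\<exists>x. ennreal a \<le> f x" and exg: "\<exists>y. ennreal b \<le> g y"
    and r: "0 < r" "r < 1"
  shows "ennreal (1-t) * emeasure lborel {x. ennreal (a*r) < f x} + ennreal t * emeasure lborel {y. ennreal (b*r) < g y}
     \<le> emeasure lborel {z. ennreal ((a powr (1-t) * b powr t) * r) < h z}"
proof -
  define SA where "SA = {x. ennreal (a*r) < f x}"
  define SB where "SB = {y. ennreal (b*r) < g y}"
  define C where "C = {z. ennreal ((a powr (1-t) * b powr t) * r) < h z}"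
  have [measurable]: "SA \<in> sets borel" "SB \<in> sets borel" "C \<in> sets borel"
    unfolding SA_def SB_def C_def by measurable
  define A' where "A' = {u. u / (1-t) \<in> SA}"
  define B' where "B' = {u. u / t \<in> SB}"
  have mA: "emeasure lborel A' = ennreal (1-t) * emeasure lborel SA"
    unfolding A'_def using t by (intro lborel_scale) auto
  have mB: "emeasure lborel B' = ennreal t * emeasure lborel SB"
    unfolding B'_def using t by (intro lborel_scale) auto
  have sA': "A' \<in> sets borel"
  proof -
    have "A' = (\<lambda>u. u / (1-t)) -` SA \<inter> space borel" by (auto simp: A'_def)
    also have "\<dots> \<in> sets borel" by measurable
    finally show ?thesis .
  qed
  have sB': "B' \<in> sets borel"
  proof -
    have "B' = (\<lambda>u. u / t) -` SB \<inter> space borel" by (auto simp: B'_def)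
    also have "\<dots> \<in> sets borel" by measurable
    finally show ?thesis .
  qed
  obtain x0 where x0: "ennreal a \<le> f x0" using exf by auto
  obtain y0 where y0: "ennreal b \<le> g y0" using exg by auto
  have "ennreal (a*r) < ennreal a" using ab r by (subst ennreal_less_iff) auto
  then have "(1-t)*x0 \<in> A'" using x0 t by (auto simp: A'_def SA_def)
  then have neA: "A' \<noteq> {}" by auto
  have "ennreal (b*r) < ennreal b" using ab r by (subst ennreal_less_iff) auto
  then have "t*y0 \<in> B'" using y0 t by (auto simp: B'_def SB_def)
  then have neB: "B' \<noteq> {}" by auto
  have sub: "u + v \<in> C" if u: "u \<in> A'" and v: "v \<in> B'" for u v
  proof -
    define x where "x = u / (1-t)"
    define y where "y = v / t"
    have fx: "ennreal (a*r) < f x" using u by (auto simp: A'_def SA_def x_def)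
    have gy: "ennreal (b*r) < g y" using v by (auto simp: B'_def SB_def y_def)
    have e1: "epow (ennreal (a*r)) (1-t) < epow (f x) (1-t)"
      using fx t by (intro epow_strict) auto
    have e2: "epow (ennreal (b*r)) t < epow (g y) t"
      using gy t by (intro epow_strict) auto
    have p1: "epow (ennreal (a*r)) (1-t) = ennreal ((a*r) powr (1-t))"
      using ab r by (intro epow_ennreal) auto
    have p2: "epow (ennreal (b*r)) t = ennreal ((b*r) powr t)"
      using ab r by (intro epow_ennreal) auto
    have pos1: "0 < (a*r) powr (1-t)" "0 < (b*r) powr t" using ab r by auto
    have "(a*r) powr (1-t) * (b*r) powr t = (a powr (1-t) * b powr t) * (r powr (1-t) * r powr t)"
      using ab r by (simp add: powr_mult)
    also have "r powr (1-t) * r powr t = r"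
      using r by (simp add: powr_add[symmetric])
    finally have eq: "(a*r) powr (1-t) * (b*r) powr t = (a powr (1-t) * b powr t) * r" .
    have "ennreal ((a powr (1-t) * b powr t) * r) = epow (ennreal (a*r)) (1-t) * epow (ennreal (b*r)) t"
      using p1 p2 eq pos1 by (simp add: ennreal_mult'[symmetric] del: ennreal_mult')
    also have "\<dots> < epow (f x) (1-t) * epow (ennreal (b*r)) t"
      using e1 p2 pos1 by (intro ennreal_mult_strict_right_mono) auto
    also have "\<dots> \<le> epow (f x) (1-t) * epow (g y) t"
      using e2 by (intro mult_left_mono) auto
    also have "\<dots> \<le> h ((1-t)*x + t*y)" by (rule H)
    also have "(1-t)*x + t*y = u + v" using t by (simp add: x_def y_def)
    finally show ?thesis by (simp add: C_def)
  qed
  have "emeasure lborel A' + emeasure lborel B' \<le> emeasure lborel C"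
    by (rule BM1[OF sA' sB' _ neA neB sub]) auto
  then show ?thesis using mA mB by (simp add: SA_def SB_def C_def)
qed

lemma level_int:
  fixes f :: "real \<Rightarrow> ennreal"
  assumes [measurable]: "f \<in> borel_measurable borel" and a: "0 < a"
  shows "(\<integral>\<^sup>+ r. indicator {0<..<1} r * emeasure lborel {x. ennreal (a*r) < f x} \<partial>lborel)
       = ennreal (1/a) * (\<integral>\<^sup>+ x. min (f x) (ennreal a) \<partial>lborel)"
proof -
  have "(\<integral>\<^sup>+ r. indicator {0<..<1} r * emeasure lborel {x. ennreal (a*r) < f x} \<partial>lborel)
     = (\<integral>\<^sup>+ r. \<integral>\<^sup>+ x. indicator {0<..<1} r * indicator {x. ennreal (a*r) < f x} x \<partial>lborel \<partial>lborel)"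
  proof (rule nn_integral_cong)
    fix r :: real
    have [measurable]: "{x. ennreal (a*r) < f x} \<in> sets borel" by measurable
    show "indicator {0<..<1} r * emeasure lborel {x. ennreal (a*r) < f x}
       = (\<integral>\<^sup>+ x. indicator {0<..<1} r * indicator {x. ennreal (a*r) < f x} x \<partial>lborel)"
      by (subst nn_integral_cmult) auto
  qed
  also have "\<dots> = (\<integral>\<^sup>+ x. \<integral>\<^sup>+ r. indicator {0<..<1} r * indicator {x. ennreal (a*r) < f x} x \<partial>lborel \<partial>lborel)"
    by (rule lborel_pair.Fubini') measurable
  also have "\<dots> = (\<integral>\<^sup>+ x. ennreal (1/a) * min (f x) (ennreal a) \<partial>lborel)"
  proof (rule nn_integral_cong)
    fix x
    have "(\<integral>\<^sup>+ r. indicator {0<..<1} r * indicator {x. ennreal (a*r) < f x} x \<partial>lborel)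
        = (\<integral>\<^sup>+ r. indicator {r. 0 < r \<and> r < 1 \<and> ennreal (a*r) < f x} r \<partial>lborel)"
      by (intro nn_integral_cong) (auto split: split_indicator)
    also have "\<dots> = emeasure lborel {r. 0 < r \<and> r < 1 \<and> ennreal (a*r) < f x}"
      by (intro nn_integral_indicator) measurable
    also have "\<dots> = ennreal (1/a) * min (f x) (ennreal a)"
    proof (cases "f x" rule: ennreal_cases)
      case top
      then have "{r. 0 < r \<and> r < 1 \<and> ennreal (a*r) < f x} = {0<..<1}" by auto
      then show ?thesis using top a by (simp add: ennreal_mult'[symmetric] del: ennreal_mult')
    next
      case (real v)
      have "{r. 0 < r \<and> r < 1 \<and> ennreal (a*r) < f x} = {0<..<min 1 (v/a)}"
        using real a by (auto simp: ennreal_less_iff field_simps)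
      then show ?thesis using real a
        by (simp add: ennreal_mult'[symmetric] min_def field_simps del: ennreal_mult')
    qed
    finally show "(\<integral>\<^sup>+ r. indicator {0<..<1} r * indicator {x. ennreal (a*r) < f x} x \<partial>lborel)
        = ennreal (1/a) * min (f x) (ennreal a)" .
  qed
  also have "\<dots> = ennreal (1/a) * (\<integral>\<^sup>+ x. min (f x) (ennreal a) \<partial>lborel)"
    by (intro nn_integral_cmult) measurable
  finally show ?thesis .
qed


lemma meas_level:
  fixes f :: "real \<Rightarrow> ennreal"
  assumes [measurable]: "f \<in> borel_measurable borel"
  shows "(\<lambda>r. emeasure lborel {x. ennreal (a*r) < f x}) \<in> borel_measurable lborel"
proof -
  have "{p::real\<times>real. ennreal (a * fst p) < f (snd p)} = {p \<in> space (lborel \<Otimes>\<^sub>M lborel). ennreal (a * fst p) < f (snd p)}"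
    by (auto simp: space_pair_measure)
  also have "\<dots> \<in> sets (lborel \<Otimes>\<^sub>M lborel)" by measurable
  finally have Q: "{p::real\<times>real. ennreal (a * fst p) < f (snd p)} \<in> sets (lborel \<Otimes>\<^sub>M lborel)" .
  have "(\<lambda>r. emeasure lborel (Pair r -` {p::real\<times>real. ennreal (a * fst p) < f (snd p)})) \<in> borel_measurable lborel"
    by (rule lborel_pair.measurable_emeasure_Pair1[OF Q])
  then show ?thesis by (simp add: vimage_def)
qed

lemma PL_trunc:
  fixes f g h :: "real \<Rightarrow> ennreal"
  assumes [measurable]: "f \<in> borel_measurable borel" "g \<in> borel_measurable borel" "h \<in> borel_measurable borel"
    and t: "0 < t" "t < 1"
    and H: "\<And>x y. epow (f x) (1-t) * epow (g y) t \<le> h ((1-t)*x + t*y)"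
    and ab: "0 < a" "0 < b" and exf: "\<exists>x. ennreal a \<le> f x" and exg: "\<exists>y. ennreal b \<le> g y"
  shows "epow (\<integral>\<^sup>+ x. min (f x) (ennreal a) \<partial>lborel) (1-t) * epow (\<integral>\<^sup>+ x. min (g x) (ennreal b) \<partial>lborel) t
     \<le> (\<integral>\<^sup>+ z. h z \<partial>lborel)"
proof -
  define c where "c = a powr (1-t) * b powr t"
  have c: "0 < c" using ab by (simp add: c_def)
  define If where "If = (\<integral>\<^sup>+ r. indicator {0<..<1} r * emeasure lborel {x. ennreal (a*r) < f x} \<partial>lborel)"
  define Ig where "Ig = (\<integral>\<^sup>+ r. indicator {0<..<1} r * emeasure lborel {x. ennreal (b*r) < g x} \<partial>lborel)"
  define Ih where "Ih = (\<integral>\<^sup>+ r. indicator {0<..<1} r * emeasure lborel {x. ennreal (c*r) < h x} \<partial>lborel)"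
  have lf: "If = ennreal (1/a) * (\<integral>\<^sup>+ x. min (f x) (ennreal a) \<partial>lborel)"
    unfolding If_def using ab by (intro level_int) auto
  have lg: "Ig = ennreal (1/b) * (\<integral>\<^sup>+ x. min (g x) (ennreal b) \<partial>lborel)"
    unfolding Ig_def using ab by (intro level_int) auto
  have lh: "Ih = ennreal (1/c) * (\<integral>\<^sup>+ x. min (h x) (ennreal c) \<partial>lborel)"
    unfolding Ih_def using c by (intro level_int) auto
  note [measurable] = meas_level[of f a] meas_level[of g b] meas_level[of h c]
  have "ennreal (1-t) * If + ennreal t * Ig =
     (\<integral>\<^sup>+ r. indicator {0<..<1} r * (ennreal (1-t) * emeasure lborel {x. ennreal (a*r) < f x}
              + ennreal t * emeasure lborel {x. ennreal (b*r) < g x}) \<partial>lborel)"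
    unfolding If_def Ig_def
    by (subst nn_integral_cmult[symmetric], measurable)+
       (subst nn_integral_add[symmetric], measurable, intro nn_integral_cong, simp add: algebra_simps)
  also have "\<dots> \<le> Ih"
    unfolding Ih_def
  proof (intro nn_integral_mono)
    fix r :: real
    show "indicator {0<..<1} r * (ennreal (1-t) * emeasure lborel {x. ennreal (a*r) < f x}
              + ennreal t * emeasure lborel {x. ennreal (b*r) < g x})
        \<le> indicator {0<..<1} r * emeasure lborel {x. ennreal (c*r) < h x}"
    proof (cases "r \<in> {0<..<1}")
      case True
      then show ?thesis using PBM[OF assms(1-5) H ab exf exg, of r] by (simp add: c_def)
    qed simp
  qed
  finally have main: "ennreal (1-t) * If + ennreal t * Ig \<le> Ih" .
  have "ennreal c * Ih = (\<integral>\<^sup>+ x. min (h x) (ennreal c) \<partial>lborel)"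
    using c by (simp add: lh mult.assoc[symmetric] ennreal_mult'[symmetric] del: ennreal_mult')
  also have "\<dots> \<le> (\<integral>\<^sup>+ z. h z \<partial>lborel)"
    by (intro nn_integral_mono) auto
  finally have hI: "ennreal c * Ih \<le> (\<integral>\<^sup>+ z. h z \<partial>lborel)" .
  have fI: "(\<integral>\<^sup>+ x. min (f x) (ennreal a) \<partial>lborel) = ennreal a * If"
    using ab by (simp add: lf mult.assoc[symmetric] ennreal_mult'[symmetric] del: ennreal_mult')
  have gI: "(\<integral>\<^sup>+ x. min (g x) (ennreal b) \<partial>lborel) = ennreal b * Ig"
    using ab by (simp add: lg mult.assoc[symmetric] ennreal_mult'[symmetric] del: ennreal_mult')
  have "epow (\<integral>\<^sup>+ x. min (f x) (ennreal a) \<partial>lborel) (1-t) * epow (\<integral>\<^sup>+ x. min (g x) (ennreal b) \<partial>lborel) t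
      = ennreal c * (epow If (1-t) * epow Ig t)"
    using ab by (simp add: fI gI epow_mult c_def ennreal_mult'[symmetric] del: ennreal_mult')
       (simp add: ac_simps ennreal_mult)
  also have "\<dots> \<le> ennreal c * (ennreal (1-t) * If + ennreal t * Ig)"
    using t by (intro mult_left_mono amgm_enn) auto
  also have "\<dots> \<le> ennreal c * Ih"
    by (intro mult_left_mono main) auto
  also have "\<dots> \<le> (\<integral>\<^sup>+ z. h z \<partial>lborel)" by (rule hI)
  finally show ?thesis .
qed

lemma epow_tendsto:
  assumes X: "X \<longlonglongrightarrow> L" and s: "0 < s"
  shows "(\<lambda>n. epow (X n) s) \<longlonglongrightarrow> epow L s"
proof (cases L rule: ennreal_cases)
  case top
  show ?thesis unfolding top epow_top
  proof (rule order_tendstoI)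
    fix y :: ennreal assume "y < top"
    then obtain r where r: "y = ennreal r" "0 \<le> r" by (metis ennreal_cases less_irrefl)
    define M where "M = (r+1) powr (1/s)"
    have "ennreal M < top" by simp
    then have ev: "eventually (\<lambda>n. ennreal M < X n) sequentially"
      using order_tendstoD(1)[OF X[unfolded top]] by blast
    show "eventually (\<lambda>n. y < epow (X n) s) sequentially"
      using ev
    proof eventually_elim
      case (elim n)
      have "epow (ennreal M) s = ennreal (r+1)"
        using r s by (simp add: epow_ennreal M_def powr_powr)
      moreover have "epow (ennreal M) s < epow (X n) s" using elim s by (intro epow_strict)
      moreover have "y < ennreal (r+1)" using r by (simp add: ennreal_lessI)
      ultimately show ?case by auto
    qed
  qed simp
next
  case (real l)
  have ev: "eventually (\<lambda>n. X n < top) sequentially"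
    using order_tendstoD(2)[OF X, of top] real by simp
  have "(\<lambda>n. ennreal (enn2real (X n) powr s)) \<longlonglongrightarrow> ennreal (enn2real L powr s)"
    using s X real by (intro tendsto_ennrealI tendsto_powr' tendsto_enn2real tendsto_const) auto
  moreover have "eventually (\<lambda>n. ennreal (enn2real (X n) powr s) = epow (X n) s) sequentially"
    using ev by eventually_elim (auto simp: epow_def)
  ultimately have "(\<lambda>n. epow (X n) s) \<longlonglongrightarrow> ennreal (enn2real L powr s)"
    by (rule Lim_transform_eventually)
  then show ?thesis using real by (simp add: epow_def)
qed

lemma approx_seq:
  fixes S :: ennreal
  assumes "0 < S"
  shows "\<exists>a::nat\<Rightarrow>real. incseq a \<and> (\<forall>n. 0 < a n \<and> ennreal (a n) < S) \<and> (\<lambda>n. ennreal (a n)) \<longlonglongrightarrow> S"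
proof (cases S rule: ennreal_cases)
  case top
  have "(\<lambda>n. ennreal (real (Suc n))) \<longlonglongrightarrow> top"
    using LIMSEQ_Suc[OF of_nat_tendsto_top_ennreal] by (simp add: ennreal_of_nat_eq_real_of_nat)
  then show ?thesis using top by (intro exI[of _ "\<lambda>n. real (Suc n)"]) (auto simp: incseq_def)
next
  case (real s)
  then have s: "0 < s" using assms by auto
  define a where "a n = s - s * inverse (real (Suc n)) / 2" for n
  have "incseq a" unfolding a_def incseq_def
    using s by (auto intro!: mult_left_mono divide_right_mono le_imp_inverse_le)
  moreover have "0 < a n \<and> ennreal (a n) < S" for n
  proof -
    have "inverse (real (Suc n)) \<le> 1" by (simp add: inverse_le_1_iff)
    then have "s * inverse (real (Suc n)) \<le> s" using s by (simp add: mult_left_le)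
    moreover have "0 < s * inverse (real (Suc n))" using s by simp
    ultimately show ?thesis using s real by (auto simp: a_def intro!: ennreal_lessI)
  qed
  moreover have "(\<lambda>n. ennreal (a n)) \<longlonglongrightarrow> S"
  proof -
    have "a \<longlonglongrightarrow> s - s * 0 / 2" unfolding a_def
      by (intro tendsto_intros LIMSEQ_inverse_real_of_nat) auto
    then show ?thesis using real by (auto intro: tendsto_ennrealI)
  qed
  ultimately show ?thesis by blast
qed

lemma PL1:
  fixes f g h :: "real \<Rightarrow> ennreal"
  assumes [measurable]: "f \<in> borel_measurable borel" "g \<in> borel_measurable borel" "h \<in> borel_measurable borel"
    and t: "0 < t" "t < 1"
    and H: "\<And>x y. epow (f x) (1-t) * epow (g y) t \<le> h ((1-t)*x + t*y)"
  shows "epow (\<integral>\<^sup>+ x. f x \<partial>lborel) (1-t) * epow (\<integral>\<^sup>+ x. g x \<partial>lborel) t \<le> (\<integral>\<^sup>+ z. h z \<partial>lborel)"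
proof (cases "(\<integral>\<^sup>+ x. f x \<partial>lborel) = 0 \<or> (\<integral>\<^sup>+ x. g x \<partial>lborel) = 0")
  case True
  then show ?thesis by auto
next
  case False
  then have F0: "(\<integral>\<^sup>+ x. f x \<partial>lborel) \<noteq> 0" and G0: "(\<integral>\<^sup>+ x. g x \<partial>lborel) \<noteq> 0" by auto
  have Sf: "0 < (SUP x. f x)"
  proof (rule ccontr)
    assume "\<not> 0 < (SUP x. f x)"
    then have "\<And>x. f x = 0" by (metis SUP_upper UNIV_I le_zero_eq not_gr_zero)
    then show False using F0 by simp
  qed
  have Sg: "0 < (SUP x. g x)"
  proof (rule ccontr)
    assume "\<not> 0 < (SUP x. g x)"
    then have "\<And>x. g x = 0" by (metis SUP_upper UNIV_I le_zero_eq not_gr_zero)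
    then show False using G0 by simp
  qed
  obtain a where a: "incseq a" "\<And>n. 0 < a n" "\<And>n. ennreal (a n) < (SUP x. f x)"
      "(\<lambda>n. ennreal (a n)) \<longlonglongrightarrow> (SUP x. f x)"
    using approx_seq[OF Sf] by blast
  obtain b where b: "incseq b" "\<And>n. 0 < b n" "\<And>n. ennreal (b n) < (SUP x. g x)"
      "(\<lambda>n. ennreal (b n)) \<longlonglongrightarrow> (SUP x. g x)"
    using approx_seq[OF Sg] by blast
  have exf: "\<exists>x. ennreal (a n) \<le> f x" for n
    using a(3)[of n] by (auto simp: less_SUP_iff intro: less_imp_le)
  have exg: "\<exists>x. ennreal (b n) \<le> g x" for n
    using b(3)[of n] by (auto simp: less_SUP_iff intro: less_imp_le)
  have bound: "epow (\<integral>\<^sup>+ x. min (f x) (ennreal (a n)) \<partial>lborel) (1-t) * epow (\<integral>\<^sup>+ x. min (g x) (ennreal (b n)) \<partial>lborel) t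
     \<le> (\<integral>\<^sup>+ z. h z \<partial>lborel)" for n
    by (rule PL_trunc[OF assms(1-5) H a(2) b(2) exf exg])
  have limf: "(\<lambda>n. \<integral>\<^sup>+ x. min (f x) (ennreal (a n)) \<partial>lborel) \<longlonglongrightarrow> (\<integral>\<^sup>+ x. f x \<partial>lborel)"
  proof (rule nn_integral_LIMSEQ)
    show "incseq (\<lambda>n x. min (f x) (ennreal (a n)))"
      unfolding incseq_def le_fun_def
    proof (intro allI impI)
      fix m n :: nat and x assume "m \<le> n"
      then have "a m \<le> a n" using a(1) by (simp add: incseq_def)
      then show "min (f x) (ennreal (a m)) \<le> min (f x) (ennreal (a n))"
        by (intro min.mono ennreal_leI) auto
    qed
    fix x
    have "(\<lambda>n. min (f x) (ennreal (a n))) \<longlonglongrightarrow> min (f x) (SUP x. f x)"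
      by (intro tendsto_min tendsto_const a(4))
    moreover have "min (f x) (SUP x. f x) = f x" by (simp add: SUP_upper min_absorb1)
    ultimately show "(\<lambda>n. min (f x) (ennreal (a n))) \<longlonglongrightarrow> f x" by simp
  qed measurable
  have limg: "(\<lambda>n. \<integral>\<^sup>+ x. min (g x) (ennreal (b n)) \<partial>lborel) \<longlonglongrightarrow> (\<integral>\<^sup>+ x. g x \<partial>lborel)"
  proof (rule nn_integral_LIMSEQ)
    show "incseq (\<lambda>n x. min (g x) (ennreal (b n)))"
      unfolding incseq_def le_fun_def
    proof (intro allI impI)
      fix m n :: nat and x assume "m \<le> n"
      then have "b m \<le> b n" using b(1) by (simp add: incseq_def)
      then show "min (g x) (ennreal (b m)) \<le> min (g x) (ennreal (b n))"
        by (intro min.mono ennreal_leI) auto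
    qed
    fix x
    have "(\<lambda>n. min (g x) (ennreal (b n))) \<longlonglongrightarrow> min (g x) (SUP x. g x)"
      by (intro tendsto_min tendsto_const b(4))
    moreover have "min (g x) (SUP x. g x) = g x" by (simp add: SUP_upper min_absorb1)
    ultimately show "(\<lambda>n. min (g x) (ennreal (b n))) \<longlonglongrightarrow> g x" by simp
  qed measurable
  have "(\<lambda>n. epow (\<integral>\<^sup>+ x. min (f x) (ennreal (a n)) \<partial>lborel) (1-t) * epow (\<integral>\<^sup>+ x. min (g x) (ennreal (b n)) \<partial>lborel) t)
     \<longlonglongrightarrow> epow (\<integral>\<^sup>+ x. f x \<partial>lborel) (1-t) * epow (\<integral>\<^sup>+ x. g x \<partial>lborel) t"
    using t F0 G0 epow_pos[OF F0, of "1-t"] epow_pos[OF G0, of t]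
    by (intro tendsto_mult_ennreal epow_tendsto limf limg) auto
  then show ?thesis using bound
    by (intro LIMSEQ_le_const2) auto
qed


definition LCe :: "(('b \<Rightarrow> real) \<Rightarrow> ennreal) \<Rightarrow> bool" where
  "LCe F \<longleftrightarrow> (\<forall>x y. \<forall>t\<in>{0<..<1}. epow (F x) (1-t) * epow (F y) t \<le> F (\<lambda>i. (1-t) * x i + t * y i))"

definition comb :: "'b set \<Rightarrow> ('b \<Rightarrow> real) \<Rightarrow> ('b \<Rightarrow> real) \<Rightarrow> ('b \<Rightarrow> real)" where
  "comb J x y = (\<lambda>i. if i \<in> J then y i else x i)"

definition mg :: "'b set \<Rightarrow> (('b \<Rightarrow> real) \<Rightarrow> ennreal) \<Rightarrow> ('b \<Rightarrow> real) \<Rightarrow> ennreal" where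
  "mg J F x = (\<integral>\<^sup>+ y. F (comb J x y) \<partial>(PiM J (\<lambda>_. lborel)))"

definition mg1 :: "'b \<Rightarrow> (('b \<Rightarrow> real) \<Rightarrow> ennreal) \<Rightarrow> ('b \<Rightarrow> real) \<Rightarrow> ennreal" where
  "mg1 j F x = (\<integral>\<^sup>+ r. F (x(j := r)) \<partial>lborel)"

abbreviation PU :: "('b \<Rightarrow> real) measure" where
  "PU \<equiv> PiM UNIV (\<lambda>_. lborel)"

lemma meas_upd_pair: "(\<lambda>(x::'b \<Rightarrow> real, r::real). x(j := r)) \<in> measurable (PU \<Otimes>\<^sub>M lborel) PU"
proof -
  have "(\<lambda>p i. (case p of (x, r) \<Rightarrow> x(j := r)) i) \<in> measurable (PU \<Otimes>\<^sub>M lborel) PU"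
  proof (rule measurable_PiM_single')
    fix i :: 'b
    show "(\<lambda>p. (case p of (x, r) \<Rightarrow> x(j := r)) i) \<in> measurable (PU \<Otimes>\<^sub>M lborel) lborel"
    proof (cases "i = j")
      case True
      then show ?thesis by (simp add: case_prod_beta)
    next
      case False
      then have "(\<lambda>p. (case p of (x, r) \<Rightarrow> x(j := r)) i) = (\<lambda>p. (fst p) i)"
        by (auto simp: case_prod_beta)
      then show ?thesis by simp
    qed
  qed (auto simp: space_PiM)
  then show ?thesis by simp
qed

lemma meas_upd: "(\<lambda>r. x(j := r)) \<in> measurable borel (PU :: ('b \<Rightarrow> real) measure)"
proof -
  have "(\<lambda>r i. (x(j := r)) i) \<in> measurable borel (PU :: ('b \<Rightarrow> real) measure)"
  proof (rule measurable_PiM_single')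
    fix i :: 'b
    show "(\<lambda>r. (x(j := r)) i) \<in> measurable borel lborel"
      by (cases "i = j") auto
  qed (auto simp: space_PiM)
  moreover have "(\<lambda>r. x(j := r)) = (\<lambda>r i. (x(j := r)) i)" by (auto simp: fun_eq_iff)
  ultimately show ?thesis by simp
qed

lemma meas_comb: "comb J x \<in> measurable (PiM J (\<lambda>_. lborel)) (PU :: ('b \<Rightarrow> real) measure)"
proof -
  have "(\<lambda>y i. comb J x y i) \<in> measurable (PiM J (\<lambda>_. lborel)) (PU :: ('b \<Rightarrow> real) measure)"
  proof (rule measurable_PiM_single')
    fix i :: 'b
    show "(\<lambda>y. comb J x y i) \<in> measurable (PiM J (\<lambda>_. lborel)) lborel"
      by (cases "i \<in> J") (auto simp: comb_def)
  qed (auto simp: space_PiM)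
  then show ?thesis by simp
qed

lemma mg1_meas:
  assumes F: "F \<in> borel_measurable (PU :: ('b \<Rightarrow> real) measure)"
  shows "mg1 j F \<in> borel_measurable PU"
proof -
  have "(\<lambda>(x, r). F (x(j := r))) \<in> borel_measurable (PU \<Otimes>\<^sub>M lborel)"
    using measurable_comp[OF meas_upd_pair[of j] F] by (simp add: comp_def case_prod_beta)
  then have "(\<lambda>x. \<integral>\<^sup>+ r. F (x(j := r)) \<partial>lborel) \<in> borel_measurable PU"
    by (intro lborel.borel_measurable_nn_integral) (simp add: case_prod_beta)
  then show ?thesis by (simp add: mg1_def[abs_def])
qed

lemma mg1_LC:
  assumes F: "F \<in> borel_measurable (PU :: ('b \<Rightarrow> real) measure)" and LC: "LCe F"
  shows "LCe (mg1 j F)"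
  unfolding LCe_def
proof (intro allI ballI)
  fix x y :: "'b \<Rightarrow> real" and t :: real assume t: "t \<in> {0<..<1}"
  define z where "z = (\<lambda>i. (1-t) * x i + t * y i)"
  have m: "(\<lambda>r. F (w(j := r))) \<in> borel_measurable borel" for w
    using measurable_comp[OF meas_upd[of w j] F] by (simp add: comp_def)
  have H: "epow (F (x(j := r))) (1-t) * epow (F (y(j := s))) t \<le> F (z(j := ((1-t) * r + t * s)))" for r s :: real
  proof -
    have "(\<lambda>i. (1-t) * (x(j := r)) i + t * (y(j := s)) i) = z(j := ((1-t) * r + t * s))"
      by (auto simp: z_def)
    then show ?thesis using LC t unfolding LCe_def by metis
  qed
  show "epow (mg1 j F x) (1-t) * epow (mg1 j F y) t \<le> mg1 j F (\<lambda>i. (1-t) * x i + t * y i)"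
    unfolding mg1_def z_def[symmetric]
    by (rule PL1[OF m[of x] m[of y] m[of z]]) (use t H in auto)
qed

lemma mg_empty: "mg {} F x = F x"
  by (simp add: mg_def PiM_empty nn_integral_count_space_finite comb_def)

lemma mg_insert:
  assumes J: "finite J" "j \<notin> J" and F: "F \<in> borel_measurable (PU :: ('b \<Rightarrow> real) measure)"
  shows "mg (insert j J) F x = mg J (mg1 j F) x"
proof -
  interpret product_sigma_finite "\<lambda>_::'b. lborel::real measure" by standard
  have m: "(\<lambda>y. F (comb (insert j J) x y)) \<in> borel_measurable (PiM (insert j J) (\<lambda>_. lborel))"
    using measurable_comp[OF meas_comb F] by (simp add: comp_def)
  have "mg (insert j J) F x = (\<integral>\<^sup>+ y. \<integral>\<^sup>+ r. F (comb (insert j J) x (y(j := r))) \<partial>lborel \<partial>(PiM J (\<lambda>_. lborel)))"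
    unfolding mg_def by (rule product_nn_integral_insert[OF J m])
  also have "\<dots> = mg J (mg1 j F) x"
    unfolding mg_def mg1_def
  proof (rule nn_integral_cong)
    fix y
    show "(\<integral>\<^sup>+ r. F (comb (insert j J) x (y(j := r))) \<partial>lborel) = (\<integral>\<^sup>+ r. F ((comb J x y)(j := r)) \<partial>lborel)"
      by (intro nn_integral_cong arg_cong[where f=F]) (auto simp: comb_def)
  qed
  finally show ?thesis .
qed

lemma mg_LC:
  assumes "finite J"
  shows "F \<in> borel_measurable (PU :: ('b \<Rightarrow> real) measure) \<Longrightarrow> LCe F \<Longrightarrow> LCe (mg J F)"
  using assms
proof (induction J arbitrary: F rule: finite_induct)
  case empty
  then show ?case by (simp add: mg_empty[abs_def])
next
  case (insert j J)
  have "mg (insert j J) F = mg J (mg1 j F)"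
    using mg_insert[OF insert.hyps(1,2) insert.prems(1)] by auto
  then show ?case
    using insert.IH[OF mg1_meas[OF insert.prems(1)] mg1_LC[OF insert.prems]] by simp
qed


definition Lz :: "'a::euclidean_space \<Rightarrow> 'a \<Rightarrow> ('a \<Rightarrow> real) \<Rightarrow> 'a" where
  "Lz \<xi> e z = (\<Sum>b\<in>Basis - {e}. z b *\<^sub>R b) + ((z e - (\<Sum>b\<in>Basis - {e}. (\<xi> \<bullet> b) * z b)) / (\<xi> \<bullet> e)) *\<^sub>R e"

lemma Lz_lin: "Lz \<xi> e (\<lambda>i. (1-t) * x i + t * y i) = (1-t) *\<^sub>R Lz \<xi> e x + t *\<^sub>R Lz \<xi> e y"
  by (simp add: Lz_def scaleR_add_left scaleR_add_right sum.distrib scaleR_sum_right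
      sum_distrib_left algebra_simps add_divide_distrib diff_divide_distrib sum_subtractf)

lemma Lz_meas: "Lz \<xi> e \<in> borel_measurable (PU :: ('a::euclidean_space \<Rightarrow> real) measure)"
  unfolding Lz_def[abs_def] by measurable

lemma Lz_comb:
  assumes "e \<in> Basis"
  shows "Lz \<xi> e (comb (Basis - {e}) (\<lambda>_. s) y) =
    (\<Sum>b\<in>Basis - {e}. y b *\<^sub>R b) + ((s - (\<Sum>b\<in>Basis - {e}. (\<xi> \<bullet> b) * y b)) / (\<xi> \<bullet> e)) *\<^sub>R e"
  unfolding Lz_def comb_def by (auto intro!: sum.cong)


theorem disint:
  fixes f :: "'a::euclidean_space \<Rightarrow> real" and \<phi> :: "real \<Rightarrow> ennreal" and \<xi> e :: 'a
  assumes f[measurable]: "f \<in> borel_measurable borel"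
    and \<phi>[measurable]: "\<phi> \<in> borel_measurable borel"
    and e: "e \<in> Basis" and k: "\<xi> \<bullet> e \<noteq> 0"
  shows "(\<integral>\<^sup>+x. ennreal (f x) * \<phi> (x \<bullet> \<xi>) \<partial>lborel) =
    (\<integral>\<^sup>+s. ennreal (1 / \<bar>\<xi> \<bullet> e\<bar>) * mg (Basis - {e}) (\<lambda>z. ennreal (f (Lz \<xi> e z))) (\<lambda>_. s) * \<phi> s \<partial>lborel)"
proof -
  interpret product_sigma_finite "\<lambda>_::'a. lborel :: real measure" by standard
  define \<kappa> where "\<kappa> = \<xi> \<bullet> e"
  define B' where "B' = Basis - {e}"
  interpret BP: finite_product_sigma_finite "\<lambda>_::'a. lborel::real measure" B' by standard (auto simp: B'_def)
  interpret PS: pair_sigma_finite "PiM B' (\<lambda>_::'a. lborel::real measure)" "lborel :: real measure"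
    by (intro pair_sigma_finite.intro BP.sigma_finite_measure_axioms lborel.sigma_finite_measure_axioms)
  have fB': "finite B'" "e \<notin> B'" by (auto simp: B'_def)
  have BB: "Basis = insert e B'" using e by (auto simp: B'_def)
  define K where "K y = ennreal (f (\<Sum>b\<in>Basis. y b *\<^sub>R b)) * \<phi> ((\<Sum>b\<in>Basis. y b *\<^sub>R b) \<bullet> \<xi>)" for y :: "'a \<Rightarrow> real"
  define H where "H y s = ennreal (f ((\<Sum>b\<in>B'. y b *\<^sub>R b) + ((s - (\<Sum>b\<in>B'. (\<xi> \<bullet> b) * y b)) / \<kappa>) *\<^sub>R e)) * \<phi> s"
    for y :: "'a \<Rightarrow> real" and s :: real
  have Km[measurable]: "K \<in> borel_measurable (PiM Basis (\<lambda>_. lborel))"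
    unfolding K_def[abs_def] by measurable
  have Hm[measurable]: "(\<lambda>(y, s). H y s) \<in> borel_measurable (PiM B' (\<lambda>_. lborel) \<Otimes>\<^sub>M lborel)"
    unfolding H_def[abs_def] B'_def by measurable
  have "(\<integral>\<^sup>+x. ennreal (f x) * \<phi> (x \<bullet> \<xi>) \<partial>lborel) = (\<integral>\<^sup>+y. K y \<partial>PiM Basis (\<lambda>_. lborel))"
    unfolding K_def by (subst lborel_eq) (simp add: nn_integral_distr)
  also have "\<dots> = (\<integral>\<^sup>+y. \<integral>\<^sup>+r. K (y(e := r)) \<partial>lborel \<partial>PiM B' (\<lambda>_. lborel))"
    unfolding BB using Km unfolding BB by (intro product_nn_integral_insert fB')
  also have "\<dots> = (\<integral>\<^sup>+y. \<integral>\<^sup>+s. ennreal (1 / \<bar>\<kappa>\<bar>) * H y s \<partial>lborel \<partial>PiM B' (\<lambda>_. lborel))"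
  proof (rule nn_integral_cong)
    fix y assume y: "y \<in> space (PiM B' (\<lambda>_::'a. lborel::real measure))"
    define Pv where "Pv = (\<Sum>b\<in>B'. y b *\<^sub>R b)"
    define c where "c = (\<Sum>b\<in>B'. (\<xi> \<bullet> b) * y b)"
    have sum_upd: "(\<Sum>b\<in>Basis. (y(e := r)) b *\<^sub>R b) = Pv + r *\<^sub>R e" for r
    proof -
      have "(\<Sum>b\<in>Basis. (y(e := r)) b *\<^sub>R b) = (y(e := r)) e *\<^sub>R e + (\<Sum>b\<in>B'. (y(e := r)) b *\<^sub>R b)"
        unfolding BB using fB' by (simp add: sum.insert)
      also have "(\<Sum>b\<in>B'. (y(e := r)) b *\<^sub>R b) = Pv"
        unfolding Pv_def using fB' by (intro sum.cong) auto
      finally show ?thesis by simp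
    qed
    have s1: "Pv \<bullet> \<xi> = c"
      unfolding Pv_def c_def inner_sum_left
    proof (rule sum.cong)
      fix b show "(y b *\<^sub>R b) \<bullet> \<xi> = (\<xi> \<bullet> b) * y b"
        using inner_commute[of b \<xi>] by simp
    qed simp
    have s2: "(r *\<^sub>R e) \<bullet> \<xi> = r * \<kappa>" for r
      using inner_commute[of e \<xi>] by (simp add: \<kappa>_def)
    have inner_eq: "(Pv + r *\<^sub>R e) \<bullet> \<xi> = c + r * \<kappa>" for r
      using s1 s2[of r] by (simp add: inner_add_left)
    define \<psi> where "\<psi> r = ennreal (f (Pv + r *\<^sub>R e)) * \<phi> (c + r * \<kappa>)" for r
    have \<psi>m[measurable]: "\<psi> \<in> borel_measurable borel" unfolding \<psi>_def[abs_def] by measurable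
    have k0: "\<kappa> \<noteq> 0" using k by (simp add: \<kappa>_def)
    have "(\<integral>\<^sup>+r. K (y(e := r)) \<partial>lborel) = (\<integral>\<^sup>+r. \<psi> r \<partial>lborel)"
      by (intro nn_integral_cong) (simp only: K_def sum_upd inner_eq \<psi>_def)
    also have "\<dots> = ennreal \<bar>1/\<kappa>\<bar> * (\<integral>\<^sup>+s. \<psi> (- c / \<kappa> + (1/\<kappa>) * s) \<partial>lborel)"
      using k0 by (intro nn_integral_real_affine) auto
    also have "(\<integral>\<^sup>+s. \<psi> (- c / \<kappa> + (1/\<kappa>) * s) \<partial>lborel) = (\<integral>\<^sup>+s. H y s \<partial>lborel)"
    proof (intro nn_integral_cong)
      fix s
      have "c + (- c / \<kappa> + (1/\<kappa>) * s) * \<kappa> = s" using k0 by (simp add: field_simps)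
      moreover have "- c / \<kappa> + (1/\<kappa>) * s = (s - c) / \<kappa>" using k0 by (simp add: field_simps)
      ultimately show "\<psi> (- c / \<kappa> + (1/\<kappa>) * s) = H y s"
        unfolding \<psi>_def H_def Pv_def c_def by simp
    qed
    finally have X: "(\<integral>\<^sup>+r. K (y(e := r)) \<partial>lborel) = ennreal \<bar>1/\<kappa>\<bar> * (\<integral>\<^sup>+s. H y s \<partial>lborel)" .
    have Hm1: "H y \<in> borel_measurable borel" unfolding H_def[abs_def] B'_def by measurable
    have "ennreal (1 / \<bar>\<kappa>\<bar>) * (\<integral>\<^sup>+s. H y s \<partial>lborel) = (\<integral>\<^sup>+s. ennreal (1 / \<bar>\<kappa>\<bar>) * H y s \<partial>lborel)"
      by (rule nn_integral_cmult[symmetric]) (use Hm1 in simp)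
    then show "(\<integral>\<^sup>+r. K (y(e := r)) \<partial>lborel) = (\<integral>\<^sup>+s. ennreal (1 / \<bar>\<kappa>\<bar>) * H y s \<partial>lborel)"
      using X by (simp add: abs_divide)
  qed
  also have "\<dots> = (\<integral>\<^sup>+s. \<integral>\<^sup>+y. ennreal (1 / \<bar>\<kappa>\<bar>) * H y s \<partial>PiM B' (\<lambda>_. lborel) \<partial>lborel)"
    by (rule PS.Fubini'[symmetric]) measurable
  also have "\<dots> = (\<integral>\<^sup>+s. ennreal (1 / \<bar>\<kappa>\<bar>) * mg (Basis - {e}) (\<lambda>z. ennreal (f (Lz \<xi> e z))) (\<lambda>_. s) * \<phi> s \<partial>lborel)"
  proof (intro nn_integral_cong)
    fix s
    define G where "G y = ennreal (f ((\<Sum>b\<in>B'. y b *\<^sub>R b) + ((s - (\<Sum>b\<in>B'. (\<xi> \<bullet> b) * y b)) / \<kappa>) *\<^sub>R e))" for y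
    have Gm[measurable]: "G \<in> borel_measurable (PiM B' (\<lambda>_. lborel))" unfolding G_def[abs_def] B'_def by measurable
    have "(\<integral>\<^sup>+y. ennreal (1 / \<bar>\<kappa>\<bar>) * H y s \<partial>PiM B' (\<lambda>_. lborel))
        = (\<integral>\<^sup>+y. ennreal (1 / \<bar>\<kappa>\<bar>) * (G y * \<phi> s) \<partial>PiM B' (\<lambda>_. lborel))"
      by (simp add: H_def G_def)
    also have "\<dots> = ennreal (1 / \<bar>\<kappa>\<bar>) * (\<integral>\<^sup>+y. G y * \<phi> s \<partial>PiM B' (\<lambda>_. lborel))"
      by (rule nn_integral_cmult) measurable
    also have "(\<integral>\<^sup>+y. G y * \<phi> s \<partial>PiM B' (\<lambda>_. lborel)) = (\<integral>\<^sup>+y. G y \<partial>PiM B' (\<lambda>_. lborel)) * \<phi> s"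
      by (rule nn_integral_multc) measurable
    also have "(\<integral>\<^sup>+y. G y \<partial>PiM B' (\<lambda>_. lborel)) = mg (Basis - {e}) (\<lambda>z. ennreal (f (Lz \<xi> e z))) (\<lambda>_. s)"
      unfolding mg_def Lz_comb[OF e] G_def B'_def \<kappa>_def ..
    finally show "(\<integral>\<^sup>+y. ennreal (1 / \<bar>\<kappa>\<bar>) * H y s \<partial>PiM B' (\<lambda>_. lborel))
        = ennreal (1 / \<bar>\<kappa>\<bar>) * mg (Basis - {e}) (\<lambda>z. ennreal (f (Lz \<xi> e z))) (\<lambda>_. s) * \<phi> s"
      by (simp add: mult.assoc)
  qed
  finally show ?thesis by (simp add: \<kappa>_def)
qed


definition LCr :: "(real \<Rightarrow> real) \<Rightarrow> bool" where
  "LCr g \<longleftrightarrow> (\<forall>x. 0 \<le> g x) \<and> (\<forall>x y. \<forall>t\<in>{0<..<1}. g x powr (1-t) * g y powr t \<le> g ((1-t)*x + t*y))"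

lemma ratio_LC:
  assumes LC: "LCr g" and u: "x0 \<le> u" and w: "0 \<le> w"
  shows "g x0 * g (u + w) \<le> g u * g (x0 + w)"
proof (cases "u = x0 \<or> w = 0")
  case True
  then show ?thesis by (auto simp: mult.commute)
next
  case False
  then have u': "x0 < u" and w': "0 < w" using u w by auto
  define D where "D = u - x0 + w"
  have D: "0 < D" using u' w' by (simp add: D_def)
  define t1 where "t1 = (u - x0) / D"
  define t2 where "t2 = w / D"
  have t1: "t1 \<in> {0<..<1}" using u' w' D unfolding t1_def
    by (auto simp: divide_less_eq D_def)
  have t2: "t2 \<in> {0<..<1}" using u' w' D unfolding t2_def
    by (auto simp: divide_less_eq D_def)
  have "t1 + t2 = D / D" unfolding t1_def t2_def D_def by (simp add: add_divide_distrib[symmetric])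
  then have s: "t1 + t2 = 1" using D by simp
  have d1: "t1 * D = u - x0" using D by (simp add: t1_def)
  have d2: "t2 * D = w" using D by (simp add: t2_def)
  have "(1-t1)*x0 + t1*(u+w) = x0 + t1 * D" by (simp add: D_def algebra_simps)
  then have e1: "(1-t1)*x0 + t1*(u+w) = u" using d1 by simp
  have "(1-t2)*x0 + t2*(u+w) = x0 + t2 * D" by (simp add: D_def algebra_simps)
  then have e2: "(1-t2)*x0 + t2*(u+w) = x0 + w" using d2 by simp
  have nn: "\<And>x. 0 \<le> g x" using LC by (simp add: LCr_def)
  have i1: "g x0 powr (1-t1) * g (u+w) powr t1 \<le> g u"
    using LC t1 e1 unfolding LCr_def by metis
  have i2: "g x0 powr (1-t2) * g (u+w) powr t2 \<le> g (x0+w)"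
    using LC t2 e2 unfolding LCr_def by metis
  have "g x0 * g (u + w) = (g x0 powr (1-t1) * g (u+w) powr t1) * (g x0 powr (1-t2) * g (u+w) powr t2)"
  proof -
    have "(g x0 powr (1-t1) * g (u+w) powr t1) * (g x0 powr (1-t2) * g (u+w) powr t2)
        = (g x0 powr (1-t1) * g x0 powr (1-t2)) * (g (u+w) powr t1 * g (u+w) powr t2)"
      by (simp add: ac_simps)
    also have "\<dots> = g x0 powr ((1-t1) + (1-t2)) * g (u+w) powr (t1 + t2)"
      by (simp only: powr_add)
    also have "(1-t1) + (1-t2) = 1" using s by simp
    also have "g x0 powr 1 = g x0" using nn[of x0] by simp
    also have "g (u+w) powr (t1 + t2) = g (u+w)" using s nn[of "u+w"] by simp
    finally show ?thesis by simp
  qed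
  also have "\<dots> \<le> g u * g (x0 + w)"
    using i1 i2 nn by (intro mult_mono) auto
  finally show ?thesis .
qed

lemma nn_shift:
  fixes \<psi> :: "real \<Rightarrow> ennreal"
  assumes [measurable]: "\<psi> \<in> borel_measurable borel"
  shows "(\<integral>\<^sup>+ x. \<psi> x \<partial>lborel) = (\<integral>\<^sup>+ x. \<psi> (u + x) \<partial>lborel)"
  using nn_integral_real_affine[of \<psi> 1 u] by simp

lemma nn_reflect:
  fixes \<psi> :: "real \<Rightarrow> ennreal"
  assumes [measurable]: "\<psi> \<in> borel_measurable borel"
  shows "(\<integral>\<^sup>+ x. \<psi> x \<partial>lborel) = (\<integral>\<^sup>+ x. \<psi> (- x) \<partial>lborel)"
  using nn_integral_real_affine[of \<psi> "-1" 0] by simp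

lemma half_sq:
  "(\<integral>\<^sup>+ u. ennreal (x - u) * indicator {x0..} u \<partial>lborel) = ennreal ((x - x0)^2 / 2) * indicator {x0..} x"
proof (cases "x0 \<le> x")
  case True
  have "(\<integral>\<^sup>+ u. ennreal (x - u) * indicator {x0..} u \<partial>lborel) = (\<integral>\<^sup>+ u. ennreal (x - u) * indicator {x0..x} u \<partial>lborel)"
    by (intro nn_integral_cong) (auto split: split_indicator simp: ennreal_neg)
  also have "\<dots> = ennreal (- ((x - x) ^ 2 / 2) - (- ((x - x0)^2 / 2)))"
  proof (rule nn_integral_has_integral_lebesgue')
    show "((\<lambda>u. x - u) has_integral (- ((x - x) ^ 2 / 2) - (- ((x - x0)^2 / 2)))) {x0..x}"
    proof (rule fundamental_theorem_of_calculus[OF True])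
      fix u assume "u \<in> {x0..x}"
      show "((\<lambda>u. - ((x - u)^2 / 2)) has_vector_derivative (x - u)) (at u within {x0..x})"
      proof -
        have "((\<lambda>u. - ((x - u)^2 / 2)) has_real_derivative (x - u)) (at u within {x0..x})"
          by (auto intro!: derivative_eq_intros simp: power2_eq_square) (simp add: field_simps)
        then show ?thesis by (simp add: has_real_derivative_iff_has_vector_derivative)
      qed
    qed
  qed auto
  finally show ?thesis using True by simp
next
  case False
  then show ?thesis
    by (subst nn_integral_cong[where v="\<lambda>_. 0"]) (auto split: split_indicator simp: ennreal_neg)
qed


lemma pred_gt[measurable (raw)]:
  fixes f h :: "'a \<Rightarrow> real"
  shows "f \<in> borel_measurable M \<Longrightarrow> h \<in> borel_measurable M \<Longrightarrow> Measurable.pred M (\<lambda>x. f x \<in> {h x<..})"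
  by simp
lemma pred_ge[measurable (raw)]:
  fixes f h :: "'a \<Rightarrow> real"
  shows "f \<in> borel_measurable M \<Longrightarrow> h \<in> borel_measurable M \<Longrightarrow> Measurable.pred M (\<lambda>x. f x \<in> {h x..})"
  by simp
lemma pred_lt[measurable (raw)]:
  fixes f h :: "'a \<Rightarrow> real"
  shows "f \<in> borel_measurable M \<Longrightarrow> h \<in> borel_measurable M \<Longrightarrow> Measurable.pred M (\<lambda>x. f x \<in> {..<h x})"
  by simp

locale lc1 =
  fixes g :: "real \<Rightarrow> real"
  assumes gm[measurable]: "g \<in> borel_measurable borel"
    and LC: "LCr g"
    and fin: "(\<integral>\<^sup>+x. ennreal (g x) \<partial>lborel) < top"
begin

lemma nn: "0 \<le> g x" using LC by (simp add: LCr_def)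

definition T :: "real \<Rightarrow> ennreal" where
  "T v = (\<integral>\<^sup>+x. ennreal (g x) * indicator {v<..} x \<partial>lborel)"

definition R1 :: "real \<Rightarrow> ennreal" where
  "R1 u = (\<integral>\<^sup>+x. ennreal (g x) * ennreal (x - u) \<partial>lborel)"

definition R2 :: "real \<Rightarrow> ennreal" where
  "R2 u = (\<integral>\<^sup>+x. ennreal (g x) * ennreal (x - u) ^ 2 \<partial>lborel)"

lemma T_meas[measurable]: "T \<in> borel_measurable borel"
  unfolding T_def[abs_def] by measurable

lemma R1_meas[measurable]: "R1 \<in> borel_measurable borel"
  unfolding R1_def[abs_def] by measurable

lemma T_fin: "T v < top"
proof -
  have "T v \<le> (\<integral>\<^sup>+x. ennreal (g x) \<partial>lborel)"
    unfolding T_def by (intro nn_integral_mono) (auto split: split_indicator)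
  then show ?thesis using fin by auto
qed

definition Tr :: "real \<Rightarrow> real" where "Tr v = enn2real (T v)"

lemma T_Tr: "T v = ennreal (Tr v)"
  using T_fin[of v] by (simp add: Tr_def)

lemma Tr_nn: "0 \<le> Tr v" by (simp add: Tr_def)

lemma T_LC:
  fixes t :: real
  assumes t: "0 < t" "t < 1"
  shows "epow (T x) (1-t) * epow (T y) t \<le> T ((1-t)*x + t*y)"
  unfolding T_def
proof (rule PL1)
  fix a b
  show "epow (ennreal (g a) * indicator {x<..} a) (1-t) * epow (ennreal (g b) * indicator {y<..} b) t
     \<le> ennreal (g ((1-t)*a + t*b)) * indicator {(1-t)*x + t*y<..} ((1-t)*a + t*b)"
  proof (cases "x < a \<and> y < b")
    case True
    then have "(1-t)*x + t*y < (1-t)*a + t*b"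
      using t by (intro add_less_le_mono mult_strict_left_mono mult_left_mono) auto
    moreover have "g a powr (1-t) * g b powr t \<le> g ((1-t)*a + t*b)"
      using LC t unfolding LCr_def by auto
    ultimately show ?thesis using True nn
      by (simp add: epow_ennreal ennreal_mult'[symmetric] del: ennreal_mult')
  next
    case False
    then show ?thesis by (auto simp: indicator_def)
  qed
qed (use t in auto)

lemma Tr_LC: "LCr Tr"
  unfolding LCr_def
proof (intro conjI allI ballI)
  fix x show "0 \<le> Tr x" by (simp add: Tr_def)
next
  fix x y t :: real assume t: "t \<in> {0<..<1}"
  have "ennreal (Tr x powr (1-t) * Tr y powr t) = epow (T x) (1-t) * epow (T y) t"
    unfolding T_Tr[of x] T_Tr[of y] by (simp add: epow_ennreal Tr_nn ennreal_mult)
  also have "\<dots> \<le> T ((1-t)*x + t*y)" using T_LC t by auto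
  also have "\<dots> = ennreal (Tr ((1-t)*x + t*y))" by (rule T_Tr)
  finally show "Tr x powr (1-t) * Tr y powr t \<le> Tr ((1-t)*x + t*y)"
    using Tr_nn by (simp add: ennreal_le_iff)
qed

lemma T_shift: "T u = (\<integral>\<^sup>+w. ennreal (g (u + w)) * indicator {0<..} w \<partial>lborel)"
  unfolding T_def
  by (subst nn_shift[where u=u]) (auto intro!: nn_integral_cong split: split_indicator)

lemma hazard:
  assumes "x0 \<le> u"
  shows "ennreal (g x0) * T u \<le> ennreal (g u) * T x0"
proof -
  have "ennreal (g x0) * T u = (\<integral>\<^sup>+w. ennreal (g x0 * g (u + w)) * indicator {0<..} w \<partial>lborel)"
    unfolding T_shift[of u] using nn
    by (subst nn_integral_cmult[symmetric]) (auto intro!: nn_integral_cong simp: ennreal_mult mult.assoc)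
  also have "\<dots> \<le> (\<integral>\<^sup>+w. ennreal (g u * g (x0 + w)) * indicator {0<..} w \<partial>lborel)"
  proof (intro nn_integral_mono)
    fix w :: real
    show "ennreal (g x0 * g (u + w)) * indicator {0<..} w \<le> ennreal (g u * g (x0 + w)) * indicator {0<..} w"
    proof (cases "0 < w")
      case True
      then show ?thesis using ratio_LC[OF LC assms, of w]
        by (auto intro!: ennreal_leI)
    qed simp
  qed
  also have "\<dots> = ennreal (g u) * T x0"
    unfolding T_shift[of x0] using nn
    by (subst nn_integral_cmult[symmetric]) (auto intro!: nn_integral_cong simp: ennreal_mult mult.assoc)
  finally show ?thesis .
qed

lemma R1_eq: "R1 u = (\<integral>\<^sup>+v. T v * indicator {u..} v \<partial>lborel)"
proof -
  have e: "ennreal (x - u) = (\<integral>\<^sup>+v. indicator {u..} v * indicator {..<x} v \<partial>lborel)" for x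
  proof -
    have "(\<integral>\<^sup>+v. indicator {u..} v * indicator {..<x} v \<partial>lborel) = (\<integral>\<^sup>+v. indicator {u..<x} v \<partial>lborel)"
      by (intro nn_integral_cong) (auto split: split_indicator)
    also have "\<dots> = emeasure lborel {u..<x}" by simp
    also have "\<dots> = ennreal (x - u)"
      by (cases "u \<le> x") (auto simp: ennreal_neg)
    finally show ?thesis by simp
  qed
  have "R1 u = (\<integral>\<^sup>+x. \<integral>\<^sup>+v. ennreal (g x) * (indicator {u..} v * indicator {..<x} v) \<partial>lborel \<partial>lborel)"
    unfolding R1_def e by (intro nn_integral_cong) (subst nn_integral_cmult, auto)
  also have "\<dots> = (\<integral>\<^sup>+v. \<integral>\<^sup>+x. ennreal (g x) * (indicator {u..} v * indicator {..<x} v) \<partial>lborel \<partial>lborel)"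
    by (rule lborel_pair.Fubini') measurable
  also have "\<dots> = (\<integral>\<^sup>+v. T v * indicator {u..} v \<partial>lborel)"
    unfolding T_def
  proof (intro nn_integral_cong)
    fix v
    show "(\<integral>\<^sup>+x. ennreal (g x) * (indicator {u..} v * indicator {..<x} v) \<partial>lborel)
        = (\<integral>\<^sup>+x. ennreal (g x) * indicator {v<..} x \<partial>lborel) * indicator {u..} v"
      by (subst nn_integral_multc[symmetric]) (auto intro!: nn_integral_cong split: split_indicator)
  qed
  finally show ?thesis .
qed

lemma T_closed: "(\<integral>\<^sup>+x. ennreal (g x) * indicator {v..} x \<partial>lborel) = T v"
  unfolding T_def
  by (intro nn_integral_cong_AE) (use AE_lborel_singleton[of v] in \<open>auto split: split_indicator\<close>)

lemma F1: "ennreal (g x0) * R1 x0 \<le> T x0 * T x0"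
proof -
  have "ennreal (g x0) * R1 x0 = (\<integral>\<^sup>+v. ennreal (g x0) * T v * indicator {x0..} v \<partial>lborel)"
    unfolding R1_eq by (subst nn_integral_cmult[symmetric]) (auto simp: mult.assoc)
  also have "\<dots> \<le> (\<integral>\<^sup>+v. T x0 * (ennreal (g v) * indicator {x0..} v) \<partial>lborel)"
  proof (intro nn_integral_mono)
    fix v
    show "ennreal (g x0) * T v * indicator {x0..} v \<le> T x0 * (ennreal (g v) * indicator {x0..} v)"
      using hazard[of x0 v] by (auto split: split_indicator simp: mult.commute)
  qed
  also have "\<dots> = T x0 * T x0"
    by (subst nn_integral_cmult) (auto simp: T_closed)
  finally show ?thesis .
qed

lemma R1_shift: "R1 u = (\<integral>\<^sup>+w. T (u + w) * indicator {0..} w \<partial>lborel)"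
  unfolding R1_eq
  by (subst nn_shift[where u=u]) (auto intro!: nn_integral_cong split: split_indicator)

lemma nbue:
  assumes "x0 \<le> u"
  shows "T x0 * R1 u \<le> T u * R1 x0"
proof -
  have "T x0 * R1 u = (\<integral>\<^sup>+w. T x0 * T (u + w) * indicator {0..} w \<partial>lborel)"
    unfolding R1_shift[of u] by (subst nn_integral_cmult[symmetric]) (auto simp: mult.assoc)
  also have "\<dots> \<le> (\<integral>\<^sup>+w. T u * T (x0 + w) * indicator {0..} w \<partial>lborel)"
  proof (intro nn_integral_mono)
    fix w :: real
    show "T x0 * T (u + w) * indicator {0..} w \<le> T u * T (x0 + w) * indicator {0..} w"
    proof (cases "0 \<le> w")
      case True
      then have "Tr x0 * Tr (u + w) \<le> Tr u * Tr (x0 + w)"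
        using ratio_LC[OF Tr_LC assms] by auto
      moreover have "T x0 * T (u + w) = ennreal (Tr x0 * Tr (u + w))"
        unfolding T_Tr[of x0] T_Tr[of "u+w"] by (simp add: Tr_nn ennreal_mult)
      moreover have "T u * T (x0 + w) = ennreal (Tr u * Tr (x0 + w))"
        unfolding T_Tr[of u] T_Tr[of "x0+w"] by (simp add: Tr_nn ennreal_mult)
      ultimately show ?thesis using True by (simp add: ennreal_leI)
    qed simp
  qed
  also have "\<dots> = T u * R1 x0"
    unfolding R1_shift[of x0] by (subst nn_integral_cmult[symmetric]) (auto simp: mult.assoc)
  finally show ?thesis .
qed

lemma R2_eq: "R2 x0 = 2 * (\<integral>\<^sup>+u. R1 u * indicator {x0..} u \<partial>lborel)"
proof -
  have e: "ennreal (x - x0) ^ 2 = 2 * (\<integral>\<^sup>+u. ennreal (x - u) * indicator {x0..} u \<partial>lborel)" for x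
  proof (cases "x0 \<le> x")
    case True
    have "ennreal (2 * ((x - x0)^2 / 2)) = ennreal 2 * ennreal ((x - x0)^2 / 2)"
      by (rule ennreal_mult) auto
    then show ?thesis unfolding half_sq using True
      by (simp add: ennreal_power)
  next
    case False
    then show ?thesis unfolding half_sq by (simp add: ennreal_neg)
  qed
  have "R2 x0 = (\<integral>\<^sup>+x. 2 * \<integral>\<^sup>+u. ennreal (g x) * (ennreal (x - u) * indicator {x0..} u) \<partial>lborel \<partial>lborel)"
    unfolding R2_def e
    by (intro nn_integral_cong) (subst nn_integral_cmult, auto simp: ac_simps)
  also have "\<dots> = 2 * (\<integral>\<^sup>+x. \<integral>\<^sup>+u. ennreal (g x) * (ennreal (x - u) * indicator {x0..} u) \<partial>lborel \<partial>lborel)"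
    by (subst nn_integral_cmult) auto
  also have "(\<integral>\<^sup>+x. \<integral>\<^sup>+u. ennreal (g x) * (ennreal (x - u) * indicator {x0..} u) \<partial>lborel \<partial>lborel)
      = (\<integral>\<^sup>+u. \<integral>\<^sup>+x. ennreal (g x) * (ennreal (x - u) * indicator {x0..} u) \<partial>lborel \<partial>lborel)"
    by (rule lborel_pair.Fubini') measurable
  also have "\<dots> = (\<integral>\<^sup>+u. R1 u * indicator {x0..} u \<partial>lborel)"
    unfolding R1_def
    by (intro nn_integral_cong) (subst nn_integral_multc[symmetric], auto simp: ac_simps)
  finally show ?thesis .
qed

lemma F2: "T x0 * R2 x0 \<le> 2 * R1 x0 * R1 x0"
proof -
  have "T x0 * (\<integral>\<^sup>+u. R1 u * indicator {x0..} u \<partial>lborel) = (\<integral>\<^sup>+u. T x0 * (R1 u * indicator {x0..} u) \<partial>lborel)"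
    by (rule nn_integral_cmult[symmetric]) measurable
  then have "T x0 * R2 x0 = 2 * (\<integral>\<^sup>+u. T x0 * R1 u * indicator {x0..} u \<partial>lborel)"
    unfolding R2_eq by (simp add: ac_simps)
  also have "\<dots> \<le> 2 * (\<integral>\<^sup>+u. R1 x0 * (T u * indicator {x0..} u) \<partial>lborel)"
  proof (intro mult_left_mono nn_integral_mono)
    fix u
    show "T x0 * R1 u * indicator {x0..} u \<le> R1 x0 * (T u * indicator {x0..} u)"
      using nbue[of x0 u] by (auto split: split_indicator simp: mult.commute)
  qed simp
  also have "\<dots> = 2 * R1 x0 * R1 x0"
    by (subst nn_integral_cmult) (auto simp: R1_eq[of x0] mult.assoc)
  finally show ?thesis .
qed

lemma F0:
  assumes "T x0 = 0"
  shows "R2 x0 = 0" "R1 x0 = 0"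
proof -
  have "AE x in lborel. ennreal (g x) * indicator {x0<..} x = 0"
    using assms unfolding T_def by (subst nn_integral_0_iff_AE[symmetric]) auto
  then have ae: "AE x in lborel. x0 < x \<longrightarrow> g x = 0"
    by eventually_elim (auto split: split_indicator simp: ennreal_eq_0_iff intro: antisym[OF _ nn])
  show "R2 x0 = 0" unfolding R2_def
    by (subst nn_integral_0_iff_AE) (use ae in \<open>auto elim!: eventually_mono simp: ennreal_neg\<close>)
  show "R1 x0 = 0" unfolding R1_def
    by (subst nn_integral_0_iff_AE) (use ae in \<open>auto elim!: eventually_mono simp: ennreal_neg\<close>)
qed

end


lemma alg_box:
  fixes P Q a b :: real
  assumes PQ: "0 < P" "0 < Q" "P + Q = 1" and a: "0 \<le> a" "a \<le> P^2" and b: "0 \<le> b" "b \<le> Q^2"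
  shows "2 * a^2 / P + 2 * b^2 / Q - (a - b)^2 \<le> 1"
proof -
  define \<alpha> where "\<alpha> = a / P^2"
  define \<beta> where "\<beta> = b / Q^2"
  have al: "0 \<le> \<alpha>" "\<alpha> \<le> 1" using a PQ by (auto simp: \<alpha>_def divide_le_eq)
  have be: "0 \<le> \<beta>" "\<beta> \<le> 1" using b PQ by (auto simp: \<beta>_def divide_le_eq)
  have ae: "a = \<alpha> * P^2" using PQ by (simp add: \<alpha>_def)
  have bq: "b = \<beta> * Q^2" using PQ by (simp add: \<beta>_def)
  define A where "A = 2*P^3 - P^4"
  define B where "B = 2*Q^3 - Q^4"
  define C where "C = P^2 * Q^2"
  have A: "0 \<le> A" unfolding A_def using PQ
  proof -
    have "P \<le> 1" using PQ by simp
    then have "P^4 \<le> P^3" using PQ by (simp add: power_decreasing)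
    moreover have "0 \<le> P^3" using PQ by simp
    ultimately show "0 \<le> 2*P^3 - P^4" by linarith
  qed
  have B: "0 \<le> B" unfolding B_def
  proof -
    have "Q \<le> 1" using PQ by simp
    then have "Q^4 \<le> Q^3" using PQ by (simp add: power_decreasing)
    moreover have "0 \<le> Q^3" using PQ by simp
    ultimately show "0 \<le> 2*Q^3 - Q^4" by linarith
  qed
  have C: "0 \<le> C" unfolding C_def by simp
  have eq: "2 * a^2 / P + 2 * b^2 / Q - (a - b)^2 = \<alpha>^2 * A + \<beta>^2 * B + 2 * (\<alpha> * \<beta>) * C"
    unfolding ae bq A_def B_def C_def using PQ
    by (simp add: field_simps power2_eq_square power3_eq_cube power4_eq_xxxx)
  have "\<alpha>^2 * A \<le> A" using al A by (simp add: mult_left_le_one_le power_le_one)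
  moreover have "\<beta>^2 * B \<le> B" using be B by (simp add: mult_left_le_one_le power_le_one)
  moreover have "(\<alpha> * \<beta>) * C \<le> C" using al be C by (simp add: mult_left_le_one_le mult_le_one)
  moreover have "A + B + 2 * C = 1 - 2 * P * Q"
    unfolding A_def B_def C_def using PQ(3) by algebra
  moreover have "0 \<le> 2 * P * Q" using PQ by simp
  ultimately show ?thesis using eq by linarith
qed

lemma alg:
  fixes P Q m R1 L1 R2 L2 :: real
  assumes PQ: "0 \<le> P" "0 \<le> Q" "P + Q = 1" and m: "0 < m"
    and nn: "0 \<le> R1" "0 \<le> L1" "0 \<le> R2" "0 \<le> L2"
    and f1: "m * R1 \<le> P^2" "m * L1 \<le> Q^2"
    and f2: "P * R2 \<le> 2 * R1^2" "Q * L2 \<le> 2 * L1^2"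
    and f0: "P = 0 \<Longrightarrow> R2 = 0" "Q = 0 \<Longrightarrow> L2 = 0"
    and var: "R2 + L2 - (R1 - L1)^2 = 1"
  shows "m \<le> 1"
proof (cases "P = 0 \<or> Q = 0")
  case True
  then show ?thesis
  proof
    assume P: "P = 0"
    then have Q: "Q = 1" using PQ by simp
    have "R1 = 0" using f1(1) P m nn(1) by (simp add: mult_le_0_iff)
    then have "L2 - L1^2 = 1" using var f0(1) P by simp
    then have "1 \<le> L1^2" using f2(2) Q by simp
    then have "1 \<le> L1" using power2_le_imp_le[of 1 L1] nn(2) by simp
    moreover have "m * L1 \<le> 1" using f1(2) Q by simp
    ultimately show ?thesis using m by (smt (verit) mult_le_cancel_left1)
  next
    assume Q: "Q = 0"
    then have P: "P = 1" using PQ by simp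
    have "L1 = 0" using f1(2) Q m nn(2) by (smt (verit) mult_pos_pos power_zero_numeral)
    then have "R2 - R1^2 = 1" using var f0(2) Q by simp
    then have "1 \<le> R1^2" using f2(1) P by simp
    then have "1 \<le> R1" using power2_le_imp_le[of 1 R1] nn(1) by simp
    moreover have "m * R1 \<le> 1" using f1(1) P by simp
    ultimately show ?thesis using m by (smt (verit) mult_le_cancel_left1)
  qed
next
  case False
  then have P: "0 < P" and Q: "0 < Q" using PQ by auto
  define a where "a = m * R1"
  define b where "b = m * L1"
  have h1: "m^2 * R2 \<le> 2 * a^2 / P"
  proof -
    have "P * (m^2 * R2) \<le> 2 * a^2"
      using f2(1) m unfolding a_def
      by (simp add: power_mult_distrib)
    then show ?thesis using P by (simp add: le_divide_eq mult.commute)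
  qed
  have h2: "m^2 * L2 \<le> 2 * b^2 / Q"
  proof -
    have "Q * (m^2 * L2) \<le> 2 * b^2"
      using f2(2) m unfolding b_def
      by (simp add: power_mult_distrib)
    then show ?thesis using Q by (simp add: le_divide_eq mult.commute)
  qed
  have "m^2 = m^2 * (R2 + L2) - (a - b)^2"
  proof -
    have "m^2 * (R2 + L2) - (a - b)^2 = m^2 * (R2 + L2 - (R1 - L1)^2)"
      unfolding a_def b_def by (simp add: algebra_simps power2_eq_square)
    then show ?thesis using var by simp
  qed
  also have "\<dots> \<le> 2 * a^2 / P + 2 * b^2 / Q - (a - b)^2"
    using h1 h2 by (simp add: algebra_simps)
  also have "\<dots> \<le> 1"
    using alg_box[OF P Q PQ(3), of a b] f1 nn m unfolding a_def b_def by auto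
  finally have "m^2 \<le> 1" .
  then show ?thesis using m by (simp add: power_le_one_iff abs_le_iff)
qed


theorem oneD:
  fixes g :: "real \<Rightarrow> real"
  assumes gm[measurable]: "g \<in> borel_measurable borel" and LC: "LCr g"
    and m0: "(\<integral>\<^sup>+s. ennreal (g s) \<partial>lborel) = 1"
    and m1: "(\<integral>\<^sup>+s. ennreal (g s) * ennreal s \<partial>lborel) = (\<integral>\<^sup>+s. ennreal (g s) * ennreal (- s) \<partial>lborel)"
    and m2: "(\<integral>\<^sup>+s. ennreal (g s) * ennreal (s^2) \<partial>lborel) = 1"
  shows "g x0 \<le> 1"
proof -
  have nn: "\<And>x. 0 \<le> g x" using LC by (simp add: LCr_def)
  show ?thesis
  proof (cases "g x0 = 0")
    case True then show ?thesis by simp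
  next
    case False
    define m where "m = g x0"
    have m: "0 < m" using False nn[of x0] by (simp add: m_def)
    interpret R: lc1 g
      using gm LC m0 by unfold_locales auto
    define gl where "gl = (\<lambda>x. g (- x))"
    have glm[measurable]: "gl \<in> borel_measurable borel" unfolding gl_def by measurable
    have glLC: "LCr gl"
      unfolding LCr_def gl_def
    proof (intro conjI allI ballI)
      fix x show "0 \<le> g (- x)" by (rule nn)
    next
      fix x y t :: real assume t: "t \<in> {0<..<1}"
      have "g (-x) powr (1-t) * g (-y) powr t \<le> g ((1-t)*(-x) + t*(-y))"
        using LC t unfolding LCr_def by blast
      then show "g (-x) powr (1-t) * g (-y) powr t \<le> g (- ((1-t)*x + t*y))"
        by (simp add: algebra_simps)
    qed
    have glint: "(\<integral>\<^sup>+x. ennreal (gl x) \<partial>lborel) = 1"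
      unfolding gl_def using m0 by (subst (asm) nn_reflect) auto
    interpret L: lc1 gl
      using glm glLC glint by unfold_locales auto
    have gi: "integrable lborel g" and gI: "integral\<^sup>L lborel g = 1"
      using nn_integral_eq_integrable[of g lborel 1] m0 nn by auto
    have e2: "(\<integral>\<^sup>+s. ennreal (g s * s^2) \<partial>lborel) = ennreal 1"
      using m2 nn by (simp add: ennreal_mult)
    have g2i: "integrable lborel (\<lambda>s. g s * s^2)" and g2I: "integral\<^sup>L lborel (\<lambda>s. g s * s^2) = 1"
      using nn_integral_eq_integrable[of "\<lambda>s. g s * s^2" lborel 1] e2 nn by auto
    have g1i: "integrable lborel (\<lambda>s. g s * s)"
    proof (rule Bochner_Integration.integrable_bound[where f="\<lambda>s. g s + g s * s^2"])
      show "integrable lborel (\<lambda>s. g s + g s * s^2)" using gi g2i by auto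
      show "AE x in lborel. norm (g x * x) \<le> norm (g x + g x * x^2)"
      proof (intro AE_I2)
        fix x :: real
        have "0 \<le> (\<bar>x\<bar> - 1)^2" by simp
        moreover have "(\<bar>x\<bar> - 1)^2 = x^2 - 2*\<bar>x\<bar> + 1" by (simp add: power2_diff)
        moreover have "0 \<le> x^2" by simp
        ultimately have "\<bar>x\<bar> \<le> 1 + x^2" by linarith
        then have "g x * \<bar>x\<bar> \<le> g x * (1 + x^2)" using nn[of x] by (rule mult_left_mono)
        then show "norm (g x * x) \<le> norm (g x + g x * x^2)"
          using nn[of x] by (simp add: abs_mult algebra_simps)
      qed
    qed measurable
    have g1I: "integral\<^sup>L lborel (\<lambda>s. g s * s) = 0"
    proof -
      have "integral\<^sup>L lborel (\<lambda>s. g s * s) = enn2real (\<integral>\<^sup>+s. ennreal (g s * s) \<partial>lborel) - enn2real (\<integral>\<^sup>+s. ennreal (- (g s * s)) \<partial>lborel)"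
        by (rule real_lebesgue_integral_def[OF g1i])
      also have "(\<integral>\<^sup>+s. ennreal (g s * s) \<partial>lborel) = (\<integral>\<^sup>+s. ennreal (g s) * ennreal s \<partial>lborel)"
        using nn by (intro nn_integral_cong) (simp add: ennreal_mult')
      also have "(\<integral>\<^sup>+s. ennreal (- (g s * s)) \<partial>lborel) = (\<integral>\<^sup>+s. ennreal (g s) * ennreal (- s) \<partial>lborel)"
        using nn by (intro nn_integral_cong) (metis ennreal_mult' mult_minus_right)
      finally show ?thesis using m1 by simp
    qed
    define p where "p = R.T x0"
    define q where "q = L.T (- x0)"
    define r1 where "r1 = R.R1 x0"
    define l1 where "l1 = L.R1 (- x0)"
    define r2 where "r2 = R.R2 x0"
    define l2 where "l2 = L.R2 (- x0)"
    have q_eq: "q = (\<integral>\<^sup>+s. ennreal (g s) * indicator {..<x0} s \<partial>lborel)"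
      unfolding q_def L.T_def unfolding gl_def
      by (subst (2) nn_reflect) (auto intro!: nn_integral_cong split: split_indicator)
    have l1_eq: "l1 = (\<integral>\<^sup>+s. ennreal (g s) * ennreal (x0 - s) \<partial>lborel)"
      unfolding l1_def L.R1_def unfolding gl_def
      by (subst (2) nn_reflect) (auto intro!: nn_integral_cong simp: add.commute)
    have l2_eq: "l2 = (\<integral>\<^sup>+s. ennreal (g s) * ennreal (x0 - s) ^ 2 \<partial>lborel)"
      unfolding l2_def L.R2_def unfolding gl_def
      by (subst (2) nn_reflect) (auto intro!: nn_integral_cong simp: add.commute)
    have pq: "p + q = 1"
    proof -
      have "p + q = (\<integral>\<^sup>+s. ennreal (g s) * indicator {x0<..} s + ennreal (g s) * indicator {..<x0} s \<partial>lborel)"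
        unfolding p_def R.T_def q_eq by (subst nn_integral_add) auto
      also have "\<dots> = (\<integral>\<^sup>+s. ennreal (g s) \<partial>lborel)"
        by (intro nn_integral_cong_AE) (use AE_lborel_singleton[of x0] in \<open>auto split: split_indicator\<close>)
      finally show ?thesis using m0 by simp
    qed
    have r2l2: "r2 + l2 = ennreal (1 + x0^2)"
    proof -
      have "r2 + l2 = (\<integral>\<^sup>+s. ennreal (g s) * ennreal (s - x0) ^ 2 + ennreal (g s) * ennreal (x0 - s) ^ 2 \<partial>lborel)"
        unfolding r2_def R.R2_def l2_eq by (subst nn_integral_add) auto
      also have "\<dots> = (\<integral>\<^sup>+s. ennreal (g s * s^2 - 2 * x0 * (g s * s) + x0^2 * g s) \<partial>lborel)"
      proof (intro nn_integral_cong)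
        fix s
        have "g s * s^2 - 2 * x0 * (g s * s) + x0^2 * g s = g s * (s - x0)^2"
          by (simp add: algebra_simps power2_eq_square)
        then show "ennreal (g s) * ennreal (s - x0) ^ 2 + ennreal (g s) * ennreal (x0 - s) ^ 2
            = ennreal (g s * s^2 - 2 * x0 * (g s * s) + x0^2 * g s)"
          using nn[of s]
          by (cases "x0 \<le> s") (auto simp: ennreal_neg ennreal_power ennreal_mult[symmetric] power2_commute)
      qed
      also have "\<dots> = ennreal (integral\<^sup>L lborel (\<lambda>s. g s * s^2 - 2 * x0 * (g s * s) + x0^2 * g s))"
      proof (rule nn_integral_eq_integral)
        show "integrable lborel (\<lambda>s. g s * s^2 - 2 * x0 * (g s * s) + x0^2 * g s)"
          using gi g1i g2i by auto
        show "AE x in lborel. 0 \<le> g x * x^2 - 2 * x0 * (g x * x) + x0^2 * g x"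
        proof (intro AE_I2)
          fix s
          have "g s * s^2 - 2 * x0 * (g s * s) + x0^2 * g s = g s * (s - x0)^2"
            by (simp add: algebra_simps power2_eq_square)
          then show "0 \<le> g s * s^2 - 2 * x0 * (g s * s) + x0^2 * g s" using nn[of s] by simp
        qed
      qed
      also have "integral\<^sup>L lborel (\<lambda>s. g s * s^2 - 2 * x0 * (g s * s) + x0^2 * g s) = 1 + x0^2"
        using gi g1i g2i gI g1I g2I by simp
      finally show ?thesis .
    qed
    have r1l1: "enn2real r1 - enn2real l1 = - x0"
    proof -
      have i: "integrable lborel (\<lambda>s. g s * s - x0 * g s)" using gi g1i by auto
      have "integral\<^sup>L lborel (\<lambda>s. g s * s - x0 * g s) = enn2real (\<integral>\<^sup>+s. ennreal (g s * s - x0 * g s) \<partial>lborel) - enn2real (\<integral>\<^sup>+s. ennreal (- (g s * s - x0 * g s)) \<partial>lborel)"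
        by (rule real_lebesgue_integral_def[OF i])
      also have "(\<integral>\<^sup>+s. ennreal (g s * s - x0 * g s) \<partial>lborel) = r1"
        unfolding r1_def R.R1_def using nn
        by (intro nn_integral_cong) (simp add: ennreal_mult'[symmetric] algebra_simps)
      also have "(\<integral>\<^sup>+s. ennreal (- (g s * s - x0 * g s)) \<partial>lborel) = l1"
        unfolding l1_eq using nn
        by (intro nn_integral_cong) (simp add: ennreal_mult'[symmetric] algebra_simps)
      finally show ?thesis using gi g1i g1I gI by simp
    qed
    have "p \<le> p + q" by (rule add_increasing2) auto
    then have pfin: "p \<le> 1" using pq by simp
    have "q \<le> p + q" by (rule add_increasing) auto
    then have qfin: "q \<le> 1" using pq by simp
    have "r2 \<le> r2 + l2" by (rule add_increasing2) auto
    then have r2fin: "r2 < top" using r2l2 by (simp add: le_less_trans)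
    have "l2 \<le> r2 + l2" by (rule add_increasing) auto
    then have l2fin: "l2 < top" using r2l2 by (simp add: le_less_trans)
    have F1r: "ennreal m * r1 \<le> p * p" unfolding m_def r1_def p_def by (rule R.F1)
    have F1l: "ennreal m * l1 \<le> q * q"
      unfolding m_def l1_def q_def using L.F1[of "- x0"] by (simp add: gl_def)
    have r1fin: "r1 < top"
    proof -
      have "p * p \<le> 1 * 1" using pfin by (intro mult_mono) auto
      then have "ennreal m * r1 < top" using F1r by (simp add: le_less_trans)
      then show ?thesis using m by (auto simp: ennreal_mult_less_top)
    qed
    have l1fin: "l1 < top"
    proof -
      have "q * q \<le> 1 * 1" using qfin by (intro mult_mono) auto
      then have "ennreal m * l1 < top" using F1l by (simp add: le_less_trans)
      then show ?thesis using m by (auto simp: ennreal_mult_less_top)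
    qed
    have F2r: "p * r2 \<le> 2 * r1 * r1" unfolding p_def r2_def r1_def by (rule R.F2)
    have F2l: "q * l2 \<le> 2 * l1 * l1" unfolding q_def l2_def l1_def by (rule L.F2)
    define P where "P = enn2real p"
    define Q where "Q = enn2real q"
    define A1 where "A1 = enn2real r1"
    define B1 where "B1 = enn2real l1"
    define A2 where "A2 = enn2real r2"
    define B2 where "B2 = enn2real l2"
    have pP: "p = ennreal P" using pfin by (simp add: P_def le_less_trans[OF _ ennreal_one_less_top])
    have qQ: "q = ennreal Q" using qfin by (simp add: Q_def le_less_trans[OF _ ennreal_one_less_top])
    have rA1: "r1 = ennreal A1" using r1fin by (simp add: A1_def)
    have lB1: "l1 = ennreal B1" using l1fin by (simp add: B1_def)
    have rA2: "r2 = ennreal A2" using r2fin by (simp add: A2_def)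
    have lB2: "l2 = ennreal B2" using l2fin by (simp add: B2_def)
    have nnr: "0 \<le> P" "0 \<le> Q" "0 \<le> A1" "0 \<le> B1" "0 \<le> A2" "0 \<le> B2"
      by (simp_all add: P_def Q_def A1_def B1_def A2_def B2_def)
    have "ennreal (P + Q) = 1" using pq pP qQ nnr by (simp add: ennreal_plus[symmetric] del: ennreal_plus)
    then have PQ: "P + Q = 1" using nnr by (metis ennreal_1 ennreal_inj add_nonneg_nonneg zero_le_one)
    have f1r: "m * A1 \<le> P^2"
      using F1r m nnr unfolding pP rA1 by (simp add: ennreal_mult[symmetric] power2_eq_square)
    have f1l: "m * B1 \<le> Q^2"
      using F1l m nnr unfolding qQ lB1 by (simp add: ennreal_mult[symmetric] power2_eq_square)
    have f2r: "P * A2 \<le> 2 * A1^2"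
    proof -
      have "ennreal (P * A2) \<le> 2 * ennreal (A1 * A1)"
        using F2r nnr unfolding pP rA2 rA1 by (simp add: ennreal_mult[symmetric] mult.assoc)
      moreover have "2 * ennreal (A1 * A1) = ennreal (2 * (A1 * A1))" using nnr by (simp add: ennreal_mult)
      ultimately have "P * A2 \<le> 2 * (A1 * A1)" using nnr by simp
      then show ?thesis by (simp add: power2_eq_square)
    qed
    have f2l: "Q * B2 \<le> 2 * B1^2"
    proof -
      have "ennreal (Q * B2) \<le> 2 * ennreal (B1 * B1)"
        using F2l nnr unfolding qQ lB2 lB1 by (simp add: ennreal_mult[symmetric] mult.assoc)
      moreover have "2 * ennreal (B1 * B1) = ennreal (2 * (B1 * B1))" using nnr by (simp add: ennreal_mult)
      ultimately have "Q * B2 \<le> 2 * (B1 * B1)" using nnr by simp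
      then show ?thesis by (simp add: power2_eq_square)
    qed
    have f0r: "P = 0 \<Longrightarrow> A2 = 0"
    proof -
      assume "P = 0" then have "R.T x0 = 0" using pP by (simp add: p_def)
      then show "A2 = 0" using R.F0 by (simp add: A2_def r2_def)
    qed
    have f0l: "Q = 0 \<Longrightarrow> B2 = 0"
    proof -
      assume "Q = 0" then have "L.T (- x0) = 0" using qQ by (simp add: q_def)
      then show "B2 = 0" using L.F0 by (simp add: B2_def l2_def)
    qed
    have var: "A2 + B2 - (A1 - B1)^2 = 1"
    proof -
      have "ennreal (A2 + B2) = ennreal (1 + x0^2)" using r2l2 nnr unfolding rA2 lB2
        by (simp add: ennreal_plus[symmetric] del: ennreal_plus)
      then have "A2 + B2 = 1 + x0^2" using nnr by (subst (asm) ennreal_inj) auto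
      moreover have "A1 - B1 = - x0" using r1l1 by (simp add: A1_def B1_def)
      ultimately show ?thesis by simp
    qed
    show ?thesis
      using alg[OF nnr(1,2) PQ m nnr(3,4,5,6) f1r f1l f2r f2l f0r f0l var] by (simp add: m_def)
  qed
qed


lemma G_finite:
  fixes G :: "real \<Rightarrow> ennreal"
  assumes Gm[measurable]: "G \<in> borel_measurable borel"
    and LC: "\<And>x y t. 0 < t \<Longrightarrow> t < 1 \<Longrightarrow> epow (G x) (1-t) * epow (G y) t \<le> G ((1-t)*x + t*y)"
    and int: "(\<integral>\<^sup>+s. G s \<partial>lborel) = 1"
  shows "G s0 < top"
proof (rule ccontr)
  assume "\<not> G s0 < top"
  then have top: "G s0 = top" using top.not_eq_extremum by blast
  have "\<exists>s1. s1 \<noteq> s0 \<and> G s1 \<noteq> 0"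
  proof (rule ccontr)
    assume "\<not> ?thesis"
    then have h: "\<And>s. s \<noteq> s0 \<Longrightarrow> G s = 0" by auto
    have "AE s in lborel. G s = 0" using AE_lborel_singleton[of s0] by (rule eventually_mono) (use h in auto)
    then have "(\<integral>\<^sup>+s. G s \<partial>lborel) = 0" by (subst nn_integral_0_iff_AE) auto
    then show False using int by simp
  qed
  then obtain s1 where s1: "s1 \<noteq> s0" "G s1 \<noteq> 0" by auto
  define I where "I = {min s0 s1<..<max s0 s1}"
  have Itop: "G z = top" if z: "z \<in> I" for z
  proof -
    define t where "t = (z - s0) / (s1 - s0)"
    have d: "s1 - s0 \<noteq> 0" using s1 by simp
    have t: "0 < t" "t < 1"
      using z s1 unfolding I_def t_def
      by (cases "s0 < s1"; auto simp: divide_pos_neg divide_less_eq divide_neg_neg less_divide_eq min_def max_def)+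
    have td: "t * (s1 - s0) = z - s0" using d by (simp add: t_def)
    have "(1-t)* s0 + t* s1 = s0 + t * (s1 - s0)" by (simp add: algebra_simps)
    then have zt: "(1-t)* s0 + t* s1 = z" using td by simp
    have "epow (G s1) t > 0" using s1 by (intro epow_pos) auto
    then have "epow (G s0) (1-t) * epow (G s1) t = top" using top by (simp add: ennreal_top_mult)
    then show ?thesis using LC[OF t, of s0 s1] zt by (simp add: top_unique)
  qed
  have "(\<integral>\<^sup>+s. top * indicator I s \<partial>lborel) \<le> (\<integral>\<^sup>+s. G s \<partial>lborel)"
    using Itop by (intro nn_integral_mono) (auto split: split_indicator)
  moreover have "(\<integral>\<^sup>+s. top * indicator I s \<partial>lborel) = top"
  proof -
    have "emeasure lborel I = ennreal (max s0 s1 - min s0 s1)" unfolding I_def by simp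
    moreover have "max s0 s1 - min s0 s1 > 0" using s1 by (auto simp: min_def max_def)
    ultimately have "emeasure lborel I \<noteq> 0" by simp
    moreover have "(\<integral>\<^sup>+s. top * indicator I s \<partial>lborel) = top * emeasure lborel I"
      by (rule nn_integral_cmult_indicator) (simp add: I_def)
    ultimately show ?thesis by (simp add: ennreal_top_mult)
  qed
  ultimately show False using int by (simp add: top_unique)
qed

lemma bdd_inner:
  assumes "compact (A :: 'a::euclidean_space set)"
  shows "bdd_above ((\<lambda>y. \<xi> \<bullet> y) ` A)"
proof -
  obtain B where B: "\<forall>y\<in>A. norm y \<le> B" using compact_imp_bounded[OF assms] by (auto simp: bounded_iff)
  show ?thesis
  proof (rule bdd_aboveI2)
    fix y assume "y \<in> A"
    then have "\<xi> \<bullet> y \<le> norm \<xi> * norm y" by (metis Cauchy_Schwarz_ineq2 abs_le_D1)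
    also have "\<dots> \<le> norm \<xi> * B" using B \<open>y \<in> A\<close> by (intro mult_left_mono) auto
    finally show "\<xi> \<bullet> y \<le> norm \<xi> * B" .
  qed
qed


lemma slab_bound:
  fixes f :: "'a::euclidean_space \<Rightarrow> real" and \<xi> :: 'a
  assumes lcd: "log_concave_density f" and iso: "isotropic_density f" and n1: "norm \<xi> = 1"
    and ab: "a \<le> b"
  shows "(\<integral>\<^sup>+x. ennreal (f x) * indicator {a..b} (x \<bullet> \<xi>) \<partial>lborel) \<le> ennreal (b - a)"
proof -
  have fm[measurable]: "f \<in> borel_measurable borel" using lcd by (simp add: log_concave_density_def)
  have fnn: "\<And>x. 0 \<le> f x" using lcd by (simp add: log_concave_density_def)
  have fLC: "\<And>x y t. t \<in> {0<..<1} \<Longrightarrow> f x powr (1 - t) * f y powr t \<le> f ((1 - t) *\<^sub>R x + t *\<^sub>R y)"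
    using lcd by (simp add: log_concave_density_def)
  have fi: "integrable lborel f" and fI: "integral\<^sup>L lborel f = 1"
    using iso by (simp_all add: isotropic_density_def)
  have mi: "\<And>i. i \<in> Basis \<Longrightarrow> integrable lborel (\<lambda>x. (x \<bullet> i) * f x) \<and> integral\<^sup>L lborel (\<lambda>x. (x \<bullet> i) * f x) = 0"
    using iso by (simp add: isotropic_density_def)
  have ci: "\<And>i j. i \<in> Basis \<Longrightarrow> j \<in> Basis \<Longrightarrow> integrable lborel (\<lambda>x. (x \<bullet> i) * (x \<bullet> j) * f x) \<and>
      integral\<^sup>L lborel (\<lambda>x. (x \<bullet> i) * (x \<bullet> j) * f x) = (if i = j then 1 else 0)"
    using iso by (simp add: isotropic_density_def)
  obtain e where e: "e \<in> Basis" and k: "\<xi> \<bullet> e \<noteq> 0"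
  proof -
    have "\<exists>e\<in>Basis. \<xi> \<bullet> e \<noteq> 0"
    proof (rule ccontr)
      assume "\<not> ?thesis"
      then have "\<xi> = 0" by (simp add: euclidean_all_zero_iff)
      then show False using n1 by simp
    qed
    then show ?thesis using that by blast
  qed
  define B' where "B' = Basis - {e}"
  have fB': "finite B'" by (simp add: B'_def)
  define F where "F z = ennreal (f (Lz \<xi> e z))" for z
  define c where "c = 1 / \<bar>\<xi> \<bullet> e\<bar>"
  have c: "0 < c" using k by (simp add: c_def)
  define G where "G s = ennreal c * mg B' F (\<lambda>_. s)" for s
  have dis: "(\<integral>\<^sup>+x. ennreal (f x) * \<phi> (x \<bullet> \<xi>) \<partial>lborel) = (\<integral>\<^sup>+s. G s * \<phi> s \<partial>lborel)"
    if [measurable]: "\<phi> \<in> borel_measurable borel" for \<phi>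
    using disint[OF fm that e k] by (simp add: G_def F_def[abs_def] B'_def c_def)
  interpret BP: finite_product_sigma_finite "\<lambda>_::'a. lborel::real measure" B' by standard (auto simp: fB')
  have Gm[measurable]: "G \<in> borel_measurable borel"
  proof -
    have "(\<lambda>s. \<integral>\<^sup>+y. ennreal (f ((\<Sum>b\<in>B'. y b *\<^sub>R b) + ((s - (\<Sum>b\<in>B'. (\<xi> \<bullet> b) * y b)) / (\<xi> \<bullet> e)) *\<^sub>R e)) \<partial>PiM B' (\<lambda>_. lborel))
        \<in> borel_measurable borel"
      by (rule BP.borel_measurable_nn_integral) (unfold B'_def, measurable)
    moreover have "mg B' F (\<lambda>_. s) = (\<integral>\<^sup>+y. ennreal (f ((\<Sum>b\<in>B'. y b *\<^sub>R b) + ((s - (\<Sum>b\<in>B'. (\<xi> \<bullet> b) * y b)) / (\<xi> \<bullet> e)) *\<^sub>R e)) \<partial>PiM B' (\<lambda>_. lborel))" for s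
      unfolding mg_def F_def B'_def Lz_comb[OF e] ..
    ultimately show ?thesis unfolding G_def[abs_def] by simp
  qed
  have FLC: "LCe F"
    unfolding LCe_def
  proof (intro allI ballI)
    fix x y :: "'a \<Rightarrow> real" and t :: real assume t: "t \<in> {0<..<1}"
    have "epow (F x) (1-t) * epow (F y) t = ennreal (f (Lz \<xi> e x) powr (1-t) * f (Lz \<xi> e y) powr t)"
      using fnn by (simp add: F_def epow_ennreal ennreal_mult)
    also have "\<dots> \<le> ennreal (f ((1-t) *\<^sub>R Lz \<xi> e x + t *\<^sub>R Lz \<xi> e y))"
      using fLC[OF t] by (intro ennreal_leI) auto
    also have "\<dots> = F (\<lambda>i. (1-t) * x i + t * y i)" by (simp add: F_def Lz_lin)
    finally show "epow (F x) (1-t) * epow (F y) t \<le> F (\<lambda>i. (1-t) * x i + t * y i)" .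
  qed
  have Fm: "F \<in> borel_measurable (PU :: ('a \<Rightarrow> real) measure)"
    unfolding F_def[abs_def] using measurable_comp[OF Lz_meas fm] by (simp add: comp_def)
  have mgLC: "LCe (mg B' F)" by (rule mg_LC[OF fB' Fm FLC])
  have GLC: "epow (G x) (1-t) * epow (G y) t \<le> G ((1-t)*x + t*y)" if t: "0 < t" "t < 1" for x y t :: real
  proof -
    have "epow (G x) (1-t) * epow (G y) t = ennreal (c powr (1-t) * c powr t) * (epow (mg B' F (\<lambda>_. x)) (1-t) * epow (mg B' F (\<lambda>_. y)) t)"
      using c by (simp add: G_def epow_mult ennreal_mult ac_simps)
    also have "c powr (1-t) * c powr t = c" using c by (simp add: powr_add[symmetric])
    also have "epow (mg B' F (\<lambda>_. x)) (1-t) * epow (mg B' F (\<lambda>_. y)) t \<le> mg B' F (\<lambda>i. (1-t) * (\<lambda>_. x) i + t * (\<lambda>_. y) i)"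
      using mgLC unfolding LCe_def
      by (erule_tac x="\<lambda>_. x" in allE, erule_tac x="\<lambda>_. y" in allE) (use t in auto)
    finally show ?thesis by (simp add: G_def mult_left_mono)
  qed
  have fint: "(\<integral>\<^sup>+x. ennreal (f x) \<partial>lborel) = 1"
    using nn_integral_eq_integral[OF fi] fnn fI by simp
  have Gint: "(\<integral>\<^sup>+s. G s \<partial>lborel) = 1"
    using dis[of "\<lambda>_. 1"] fint by simp
  have Gfin: "G s < top" for s by (rule G_finite[OF Gm GLC Gint])
  define g where "g s = enn2real (G s)" for s
  have Gg: "G s = ennreal (g s)" for s using Gfin[of s] by (simp add: g_def)
  have gm[measurable]: "g \<in> borel_measurable borel" unfolding g_def[abs_def] by measurable
  have gnn: "0 \<le> g s" for s by (simp add: g_def)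
  have gLC: "LCr g"
    unfolding LCr_def
  proof (intro conjI allI ballI)
    fix x show "0 \<le> g x" by (rule gnn)
  next
    fix x y t :: real assume t: "t \<in> {0<..<1}"
    have "ennreal (g x powr (1-t) * g y powr t) = epow (G x) (1-t) * epow (G y) t"
      unfolding Gg by (simp add: epow_ennreal gnn ennreal_mult)
    also have "\<dots> \<le> G ((1-t)*x + t*y)" using GLC t by auto
    finally show "g x powr (1-t) * g y powr t \<le> g ((1-t)*x + t*y)"
      unfolding Gg using gnn by simp
  qed
  have m0: "(\<integral>\<^sup>+s. ennreal (g s) \<partial>lborel) = 1" using Gint by (simp add: Gg)
  have hx: "(x \<bullet> \<xi>) * f x = (\<Sum>b\<in>Basis. (\<xi> \<bullet> b) * ((x \<bullet> b) * f x))" for x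
    by (simp add: euclidean_inner[of x \<xi>] sum_distrib_right sum_distrib_left algebra_simps)
  have hi: "integrable lborel (\<lambda>x. (x \<bullet> \<xi>) * f x)"
    unfolding hx using mi by (intro Bochner_Integration.integrable_sum Bochner_Integration.integrable_mult_right) auto
  have hI: "integral\<^sup>L lborel (\<lambda>x. (x \<bullet> \<xi>) * f x) = 0"
    unfolding hx using mi by (subst Bochner_Integration.integral_sum) auto
  have m1: "(\<integral>\<^sup>+s. ennreal (g s) * ennreal s \<partial>lborel) = (\<integral>\<^sup>+s. ennreal (g s) * ennreal (- s) \<partial>lborel)"
  proof -
    have a1: "(\<integral>\<^sup>+x. ennreal ((x \<bullet> \<xi>) * f x) \<partial>lborel) = (\<integral>\<^sup>+x. ennreal (f x) * ennreal (x \<bullet> \<xi>) \<partial>lborel)"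
      by (intro nn_integral_cong) (metis ennreal_mult'' fnn mult.commute)
    have b1: "(\<integral>\<^sup>+x. ennreal (- ((x \<bullet> \<xi>) * f x)) \<partial>lborel) = (\<integral>\<^sup>+x. ennreal (f x) * ennreal (- (x \<bullet> \<xi>)) \<partial>lborel)"
      by (intro nn_integral_cong) (metis ennreal_mult'' fnn mult.commute mult_minus_left)
    have a: "(\<integral>\<^sup>+s. ennreal (g s) * ennreal s \<partial>lborel) = (\<integral>\<^sup>+x. ennreal ((x \<bullet> \<xi>) * f x) \<partial>lborel)"
      unfolding a1 by (subst dis) (auto simp: Gg)
    have b: "(\<integral>\<^sup>+s. ennreal (g s) * ennreal (- s) \<partial>lborel) = (\<integral>\<^sup>+x. ennreal (- ((x \<bullet> \<xi>) * f x)) \<partial>lborel)"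
      unfolding b1 by (subst dis) (auto simp: Gg)
    have "0 = enn2real (\<integral>\<^sup>+x. ennreal ((x \<bullet> \<xi>) * f x) \<partial>lborel) - enn2real (\<integral>\<^sup>+x. ennreal (- ((x \<bullet> \<xi>) * f x)) \<partial>lborel)"
      using real_lebesgue_integral_def[OF hi] hI by simp
    moreover have "(\<integral>\<^sup>+x. ennreal ((x \<bullet> \<xi>) * f x) \<partial>lborel) < top" "(\<integral>\<^sup>+x. ennreal (- ((x \<bullet> \<xi>) * f x)) \<partial>lborel) < top"
      using integrableD[OF hi] by (auto simp: top.not_eq_extremum)
    ultimately show ?thesis unfolding a b by (metis eq_iff_diff_eq_0 ennreal_enn2real)
  qed
  have qx: "(x \<bullet> \<xi>)^2 * f x = (\<Sum>i\<in>Basis. \<Sum>j\<in>Basis. ((\<xi> \<bullet> i) * (\<xi> \<bullet> j)) * ((x \<bullet> i) * (x \<bullet> j) * f x))" for x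
  proof -
    have "(x \<bullet> \<xi>)^2 * f x = (\<Sum>i\<in>Basis. (x \<bullet> i) * (\<xi> \<bullet> i)) * (\<Sum>j\<in>Basis. (x \<bullet> j) * (\<xi> \<bullet> j)) * f x"
      by (simp add: power2_eq_square euclidean_inner[of x \<xi>])
    also have "\<dots> = (\<Sum>i\<in>Basis. \<Sum>j\<in>Basis. ((x \<bullet> i) * (\<xi> \<bullet> i)) * ((x \<bullet> j) * (\<xi> \<bullet> j)) * f x)"
      by (simp add: sum_distrib_right sum_distrib_left mult.assoc) (rule sum.swap)
    also have "\<dots> = (\<Sum>i\<in>Basis. \<Sum>j\<in>Basis. ((\<xi> \<bullet> i) * (\<xi> \<bullet> j)) * ((x \<bullet> i) * (x \<bullet> j) * f x))"
      by (intro sum.cong refl) (simp add: algebra_simps)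
    finally show ?thesis .
  qed
  have qi: "integrable lborel (\<lambda>x. (x \<bullet> \<xi>)^2 * f x)"
    unfolding qx using ci by (intro Bochner_Integration.integrable_sum Bochner_Integration.integrable_mult_right) auto
  have qI: "integral\<^sup>L lborel (\<lambda>x. (x \<bullet> \<xi>)^2 * f x) = 1"
  proof -
    have "integral\<^sup>L lborel (\<lambda>x. (x \<bullet> \<xi>)^2 * f x) = (\<Sum>i\<in>Basis. \<Sum>j\<in>Basis. ((\<xi> \<bullet> i) * (\<xi> \<bullet> j)) * (if i = j then 1 else 0))"
      unfolding qx using ci by (simp add: Bochner_Integration.integral_sum Bochner_Integration.integrable_sum)
    also have "\<dots> = (\<Sum>i\<in>Basis. (\<xi> \<bullet> i) * (\<xi> \<bullet> i))"
      by (simp add: if_distrib cong: if_cong)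
    also have "\<dots> = \<xi> \<bullet> \<xi>" by (simp add: euclidean_inner[of \<xi> \<xi>])
    also have "\<dots> = 1" using n1 by (simp add: power2_norm_eq_inner[symmetric])
    finally show ?thesis .
  qed
  have m2: "(\<integral>\<^sup>+s. ennreal (g s) * ennreal (s^2) \<partial>lborel) = 1"
  proof -
    have "(\<integral>\<^sup>+s. ennreal (g s) * ennreal (s^2) \<partial>lborel) = (\<integral>\<^sup>+x. ennreal ((x \<bullet> \<xi>)^2 * f x) \<partial>lborel)"
    proof -
      have "(\<integral>\<^sup>+x. ennreal ((x \<bullet> \<xi>)^2 * f x) \<partial>lborel) = (\<integral>\<^sup>+x. ennreal (f x) * ennreal ((x \<bullet> \<xi>)^2) \<partial>lborel)"
        by (intro nn_integral_cong) (metis ennreal_mult'' fnn mult.commute)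
      also have "\<dots> = (\<integral>\<^sup>+s. G s * ennreal (s^2) \<partial>lborel)" by (subst dis) auto
      finally show ?thesis by (simp add: Gg)
    qed
    also have "\<dots> = ennreal (integral\<^sup>L lborel (\<lambda>x. (x \<bullet> \<xi>)^2 * f x))"
      using fnn by (intro nn_integral_eq_integral qi) auto
    finally show ?thesis using qI by simp
  qed
  have gle: "g s \<le> 1" for s by (rule oneD[OF gm gLC m0 m1 m2])
  have "(\<integral>\<^sup>+x. ennreal (f x) * indicator {a..b} (x \<bullet> \<xi>) \<partial>lborel) = (\<integral>\<^sup>+s. G s * indicator {a..b} s \<partial>lborel)"
    by (rule dis) measurable
  also have "\<dots> \<le> (\<integral>\<^sup>+s. indicator {a..b} s \<partial>lborel)"
    using gle by (intro nn_integral_mono) (auto simp: Gg split: split_indicator)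
  also have "\<dots> = ennreal (b - a)" using ab by simp
  finally show ?thesis .
qed


theorem lemma4p1:
  fixes f :: "'a::euclidean_space \<Rightarrow> real" and A :: "'a set"
  assumes "log_concave_density f"
    and "isotropic_density f"
    and "convex_body A"
  shows "measure (density lborel (\<lambda>x. ennreal (f x))) A \<le> min_width A"
proof -
  have fm[measurable]: "f \<in> borel_measurable borel" using assms(1) by (simp add: log_concave_density_def)
  have cA: "compact A" and neA: "A \<noteq> {}" using assms(3) by (auto simp: convex_body_def)
  have As[measurable]: "A \<in> sets borel" using cA by (simp add: compact_imp_closed borel_closed)
  have key: "measure (density lborel (\<lambda>x. ennreal (f x))) A \<le> width A \<xi>" if n1: "\<xi> \<in> sphere 0 1" for \<xi>
  proof -
    have n1': "norm \<xi> = 1" using n1 by simp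
    define hi where "hi = support_fun A \<xi>"
    define lo where "lo = - support_fun A (- \<xi>)"
    have inA: "lo \<le> x \<bullet> \<xi> \<and> x \<bullet> \<xi> \<le> hi" if x: "x \<in> A" for x
    proof
      have "\<xi> \<bullet> x \<le> support_fun A \<xi>"
        unfolding support_fun_def using x bdd_inner[OF cA] by (intro cSUP_upper) auto
      then show "x \<bullet> \<xi> \<le> hi" by (simp add: hi_def inner_commute)
      have "(- \<xi>) \<bullet> x \<le> support_fun A (- \<xi>)"
        unfolding support_fun_def by (rule cSUP_upper[OF x bdd_inner[OF cA, of "- \<xi>"]])
      then show "lo \<le> x \<bullet> \<xi>" by (simp add: lo_def inner_commute)
    qed
    obtain x0 where "x0 \<in> A" using neA by auto
    then have lohi: "lo \<le> hi" using inA by force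
    have "emeasure (density lborel (\<lambda>x. ennreal (f x))) A = (\<integral>\<^sup>+x. ennreal (f x) * indicator A x \<partial>lborel)"
      by (subst emeasure_density) auto
    also have "\<dots> \<le> (\<integral>\<^sup>+x. ennreal (f x) * indicator {lo..hi} (x \<bullet> \<xi>) \<partial>lborel)"
      using inA by (intro nn_integral_mono) (auto split: split_indicator)
    also have "\<dots> \<le> ennreal (hi - lo)"
      by (rule slab_bound[OF assms(1,2) n1' lohi])
    finally have em: "emeasure (density lborel (\<lambda>x. ennreal (f x))) A \<le> ennreal (hi - lo)" .
    have "measure (density lborel (\<lambda>x. ennreal (f x))) A \<le> hi - lo"
      using em lohi unfolding measure_def by (metis enn2real_ennreal enn2real_mono ennreal_less_top diff_ge_0_iff_ge)
    also have "hi - lo = width A \<xi>" by (simp add: hi_def lo_def width_def)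
    finally show ?thesis .
  qed
  have "sphere (0::'a) 1 \<noteq> {}"
  proof -
    obtain b :: 'a where "b \<in> Basis" using SOME_Basis by blast
    then have "b \<in> sphere 0 1" by simp
    then show ?thesis by blast
  qed
  then show ?thesis unfolding min_width_def by (intro cINF_greatest key)
qed


end
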